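(* For the fully labeled one-dimensional rearrangement problem (LOR), with respect to the total cost $J_T(P)=Nc_p+\sum_{i=0}^N|p_i-p_{i+1}|\,c_t$ (any constants $c_p,c_t>0$): (i) SweepCyclesLOR computes globally optimal solutions in the asymptotic sense in expectation, i.e., for a uniformly random permutation $\pi$ of $\{1,\dots,m\}$, the ratio of the expected cost of the SweepCyclesLOR plan to the expected minimum of $J_T$ over all valid plans tends to $1$ as $m\to\infty$; and (ii) for every instance $\pi$, OptPlanLOR computes a valid plan minimizing $J_T$ over all valid plans.
   Context: Setting (LOR). A row of $m$ cells $1,\dots,m$, cell $i$ located at the point $i$ on the real line. Each cell initially holds exactly one item; items carry distinct labels $1,\dots,m$. An instance is a permutation $\pi$ of $\{1,\dots,m\}$, where $\pi_i$ is the label of the item initially in cell $i$; the goal is that item $i$ ends in cell $i$. A robot end-effector can hold at most one item; it starts at cell $1$ holding nothing. A pick-n-swap operation at a cell $p$: if holding nothing, pick up the item in $p$; if holding an item and $p$ contains an item, exchange the two; if holding an item and $p$ is empty, put the held item into $p$. A plan is a sequence $P=(p_0,p_1,\dots,p_N)$ of cells ($p_0=$ cell $1$) visited in order with a pick-n-swap at each of $p_1,\dots,p_N$, followed by a return to $p_{N+1}:=p_0$; it is valid if at the end every item $i$ is in cell $i$ and the end-effector holds nothing. SweepCyclesLOR: while some cell $i$ holds an item with label $\ne i$, let $i$ be the smallest such cell; go to $i$ and pick up its item, say label $g$; while $g\neq i$, go to cell $g$ and swap (item $g$ placed, the item previously in cell $g$, label $g'$, becomes held; $g:=g'$); finally go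 to cell $i$ and place the held item. When done, return to cell $1$. Cycles: the non-trivial cycles of $\pi$ (cell $i$ points to cell $\pi_i$); $\min(c),\max(c)$ the smallest/largest cell of cycle $c$, extended to sets of cycles. Cycle groups: repeatedly merge groups of cycles whose intervals $[\min,\max]$ intersect until pairwise disjoint. OptPlanLOR: groups are processed from left to right; in a group with cycles ordered by $\min$, follow the first cycle from its minimum cell by cycle following; whenever the end-effector carrying an item would pass over $\min(c')$ of the next not-yet-started cycle $c'$ of the group, it parks the carried item by swapping it into cell $\min(c')$, follows $c'$ (recursively with the same rule), retrieves the parked item when $c'$ closes and resumes; upon reaching the right end $\max(C)$ of the current group $C$, it first processes the groups to the right (recursively) and then returns to complete $C$; finally it returns to cell $1$. *)

theory Defs
  imports Complex_Main "HOL-Combinatorics.Permutations"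
begin

text \<open>A configuration: the content of every cell (None = empty) and the content of the
  end-effector (None = holding nothing).  Labels and cells are natural numbers 1..m.\<close>

type_synonym lstate = "(nat \<Rightarrow> nat option) \<times> nat option"

definition pns :: "nat \<Rightarrow> lstate \<Rightarrow> lstate" where
  "pns p s = (case snd s of
       None \<Rightarrow> ((fst s)(p := None), fst s p)
     | Some a \<Rightarrow> ((fst s)(p := Some a), fst s p))"

definition run :: "nat list \<Rightarrow> lstate \<Rightarrow> lstate" where
  "run ps s = fold pns ps s"

definition init :: "(nat \<Rightarrow> nat) \<Rightarrow> nat \<Rightarrow> lstate" where
  "init \<pi> m = ((\<lambda>i. if i \<in> {1..m} then Some (\<pi> i) else None), None)"

definition goal :: "nat \<Rightarrow> lstate" where
  "goal m = ((\<lambda>i. if i \<in> {1..m} then Some i else None), None)"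

text \<open>A plan is the list [p_1,...,p_N]; p_0 = 1 and p_(N+1) = p_0 are implicit.\<close>
definition valid_plan :: "nat \<Rightarrow> (nat \<Rightarrow> nat) \<Rightarrow> nat list \<Rightarrow> bool" where
  "valid_plan m \<pi> ps \<longleftrightarrow> set ps \<subseteq> {1..m} \<and> run ps (init \<pi> m) = goal m"

definition path_len :: "nat list \<Rightarrow> real" where
  "path_len xs = sum_list (map (\<lambda>(a,b). \<bar>real a - real b\<bar>) (zip xs (tl xs)))"

definition cost :: "real \<Rightarrow> real \<Rightarrow> nat list \<Rightarrow> real" where
  "cost cp ct ps = real (length ps) * cp + path_len (1 # ps @ [1]) * ct"

definition opt_cost :: "real \<Rightarrow> real \<Rightarrow> nat \<Rightarrow> (nat \<Rightarrow> nat) \<Rightarrow> real" where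
  "opt_cost cp ct m \<pi> = Inf {cost cp ct ps | ps. valid_plan m \<pi> ps}"

text \<open>Inner loop: holding label g; while g ~= i go to g and swap; finally go to i and place.
  The first argument is fuel (never exhausted for permutations).\<close>
fun sw_follow :: "nat \<Rightarrow> nat \<Rightarrow> lstate \<Rightarrow> nat list" where
  "sw_follow 0 i s = []"
| "sw_follow (Suc n) i s = (case snd s of None \<Rightarrow> []
     | Some g \<Rightarrow> (if g = i then [i] else g # sw_follow n i (pns g s)))"

fun sw_loop :: "nat \<Rightarrow> nat \<Rightarrow> lstate \<Rightarrow> nat list" where
  "sw_loop 0 m s = []"
| "sw_loop (Suc n) m s =
    (let B = {i \<in> {1..m}. fst s i \<noteq> Some i} in
     if B = {} then []
     else (let i = Min B; s1 = pns i s; path = sw_follow (Suc m) i s1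
           in i # path @ sw_loop n m (run path s1)))"

definition sweep_plan :: "(nat \<Rightarrow> nat) \<Rightarrow> nat \<Rightarrow> nat list" where
  "sweep_plan \<pi> m = sw_loop (Suc m) m (init \<pi> m)"

definition orb :: "(nat \<Rightarrow> nat) \<Rightarrow> nat \<Rightarrow> nat set" where
  "orb \<pi> i = range (\<lambda>k. (\<pi> ^^ k) i)"

definition cmin :: "(nat \<Rightarrow> nat) \<Rightarrow> nat \<Rightarrow> nat" where
  "cmin \<pi> i = Min (orb \<pi> i)"

definition cmax :: "(nat \<Rightarrow> nat) \<Rightarrow> nat \<Rightarrow> nat" where
  "cmax \<pi> i = Max (orb \<pi> i)"

definition cycmins :: "(nat \<Rightarrow> nat) \<Rightarrow> nat \<Rightarrow> nat set" where
  "cycmins \<pi> m = {y \<in> {1..m}. \<pi> y \<noteq> y \<and> cmin \<pi> y = y}"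

definition ovl :: "(nat \<Rightarrow> nat) \<Rightarrow> nat \<Rightarrow> (nat \<times> nat) set" where
  "ovl \<pi> m = {(i,j). i \<in> {1..m} \<and> j \<in> {1..m} \<and> \<pi> i \<noteq> i \<and> \<pi> j \<noteq> j \<and>
                    cmin \<pi> i \<le> cmax \<pi> j \<and> cmin \<pi> j \<le> cmax \<pi> i}"

definition grp :: "(nat \<Rightarrow> nat) \<Rightarrow> nat \<Rightarrow> nat \<Rightarrow> nat set" where
  "grp \<pi> m i = {j. (i,j) \<in> (ovl \<pi> m)\<^sup>*}"

definition gmax :: "(nat \<Rightarrow> nat) \<Rightarrow> nat \<Rightarrow> nat \<Rightarrow> nat" where
  "gmax \<pi> m i = Max (grp \<pi> m i)"

text \<open>Simulation of OptPlanLOR as a robot: state s, current position x, set st of minimal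
  cells of cycles already started.  First argument is fuel.
  - Empty hand: start the not-yet-started cycle with smallest minimum (or stop).
  - Holding label g at position x which is the right end of its group and there are
    unstarted cycles to the right: go right and park at the minimum of the next group.
  - Otherwise head to g, but if the minimum of the next not-yet-started cycle of the group
    of g lies strictly between x and g, park there (swap) and thereby start that cycle.\<close>
fun opt_run :: "nat \<Rightarrow> (nat \<Rightarrow> nat) \<Rightarrow> nat \<Rightarrow> lstate \<Rightarrow> nat \<Rightarrow> nat set \<Rightarrow> nat list" where
  "opt_run 0 \<pi> m s x st = []"
| "opt_run (Suc n) \<pi> m s x st =
    (case snd s of
       None \<Rightarrow>
         (let U = {y \<in> cycmins \<pi> m. y \<notin> st} in
          if U = {} then []
          else (let y = Min U in y # opt_run n \<pi> m (pns y s) y (insert y st)))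
     | Some g \<Rightarrow>
         (let R = {y \<in> cycmins \<pi> m. y \<notin> st \<and> x < y} in
          if x = gmax \<pi> m x \<and> R \<noteq> {} then
            (let y = Min R in y # opt_run n \<pi> m (pns y s) y (insert y st))
          else
            (let U = {y \<in> cycmins \<pi> m. y \<notin> st \<and> y \<in> grp \<pi> m g} in
             if U \<noteq> {} \<and> min x g < Min U \<and> Min U < max x g then
               (let y = Min U in y # opt_run n \<pi> m (pns y s) y (insert y st))
             else g # opt_run n \<pi> m (pns g s) g st)))"

definition opt_plan :: "(nat \<Rightarrow> nat) \<Rightarrow> nat \<Rightarrow> nat list" where
  "opt_plan \<pi> m = opt_run (4 * m + 4) \<pi> m (init \<pi> m) 1 {}"

definition perms :: "nat \<Rightarrow> (nat \<Rightarrow> nat) set" where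
  "perms m = {\<pi>. \<pi> permutes {1..m}}"

definition exp_sweep_cost :: "real \<Rightarrow> real \<Rightarrow> nat \<Rightarrow> real" where
  "exp_sweep_cost cp ct m =
     (\<Sum>\<pi>\<in>perms m. cost cp ct (sweep_plan \<pi> m)) / real (card (perms m))"

definition exp_opt_cost :: "real \<Rightarrow> real \<Rightarrow> nat \<Rightarrow> real" where
  "exp_opt_cost cp ct m =
     (\<Sum>\<pi>\<in>perms m. opt_cost cp ct m \<pi>) / real (card (perms m))"

end

theory Submission
  imports Defs "HOL-Combinatorics.Orbits"
begin

locale lor =
  fixes \<pi> :: "nat \<Rightarrow> nat" and m :: nat
  assumes perm: "\<pi> permutes {1..m}"
begin

lemma permutation_pi: "permutation \<pi>"
  using perm permutation_permutes by (metis finite_atLeastAtMost)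

lemma pi_in: "i \<in> {1..m} \<Longrightarrow> \<pi> i \<in> {1..m}"
  by (simp only: permutes_in_image[OF perm])

lemma pi_out: "i \<notin> {1..m} \<Longrightarrow> \<pi> i = i"
  by (rule permutes_not_in[OF perm])

lemma inj_pi: "inj \<pi>"
  by (rule permutes_inj[OF perm])

lemma pi_eq_iff[simp]: "\<pi> a = \<pi> b \<longleftrightarrow> a = b"
  using inj_pi by (meson injD)

lemma funpow_in: "i \<in> {1..m} \<Longrightarrow> (\<pi> ^^ k) i \<in> {1..m}"
proof (induct k)
  case (Suc k) then show ?case using pi_in[of "(\<pi> ^^ k) i"] by simp
qed simp

lemma orb_orbit: "orb \<pi> i = orbit \<pi> i"
  unfolding orb_def orbit_altdef_permutation[OF permutation_pi] by auto

lemma self_in_orb[simp]: "i \<in> orb \<pi> i"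
  unfolding orb_def by (metis funpow_0 rangeI)

lemma finite_orb[simp]: "finite (orb \<pi> i)"
  unfolding orb_orbit by (rule finite_orbit[OF permutation_self_in_orbit[OF permutation_pi]])

lemma orb_step[simp]: "orb \<pi> (\<pi> i) = orb \<pi> i"
  unfolding orb_orbit by (rule permutation_orbit_step[OF permutation_pi])

lemma pi_in_orb: "j \<in> orb \<pi> i \<Longrightarrow> \<pi> j \<in> orb \<pi> i"
  unfolding orb_def by (auto, metis funpow.simps(2) o_apply rangeI)

lemma orb_eq: "j \<in> orb \<pi> i \<Longrightarrow> orb \<pi> j = orb \<pi> i"
  unfolding orb_orbit
  by (meson orbit_swap orbit_trans permutation_pi permutation_self_in_orbit subset_antisym subsetI)

lemma orb_subset: "i \<in> {1..m} \<Longrightarrow> orb \<pi> i \<subseteq> {1..m}"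
  unfolding orb_def using funpow_in by auto

lemma orb_fixed: "\<pi> i = i \<Longrightarrow> orb \<pi> i = {i}"
  by (simp add: orb_orbit orbit_eq_singleton_iff)

lemma orb_nonfixed: "j \<in> orb \<pi> i \<Longrightarrow> \<pi> i \<noteq> i \<Longrightarrow> \<pi> j \<noteq> j"
  by (metis orb_eq orb_fixed singletonD self_in_orb)

lemma cmin_in: "cmin \<pi> i \<in> orb \<pi> i"
  unfolding cmin_def using self_in_orb[of i] finite_orb[of i] by (metis Min_in empty_iff)

lemma cmax_in: "cmax \<pi> i \<in> orb \<pi> i"
  unfolding cmax_def using self_in_orb[of i] finite_orb[of i] by (metis Max_in empty_iff)

lemma cmin_le: "j \<in> orb \<pi> i \<Longrightarrow> cmin \<pi> i \<le> j"
  unfolding cmin_def by simp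

lemma cmax_ge: "j \<in> orb \<pi> i \<Longrightarrow> j \<le> cmax \<pi> i"
  unfolding cmax_def by simp

lemma cmin_orb: "j \<in> orb \<pi> i \<Longrightarrow> cmin \<pi> j = cmin \<pi> i"
  unfolding cmin_def using orb_eq by simp

lemma cmax_orb: "j \<in> orb \<pi> i \<Longrightarrow> cmax \<pi> j = cmax \<pi> i"
  unfolding cmax_def using orb_eq by simp

lemma cmin_pi[simp]: "cmin \<pi> (\<pi> i) = cmin \<pi> i"
  unfolding cmin_def by simp

lemma cmax_pi[simp]: "cmax \<pi> (\<pi> i) = cmax \<pi> i"
  unfolding cmax_def by simp

lemma cmin_self: "cmin \<pi> i \<le> i" using cmin_le self_in_orb by blast
lemma cmax_self: "i \<le> cmax \<pi> i" using cmax_ge self_in_orb by blast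

lemma cmin_cmin[simp]: "cmin \<pi> (cmin \<pi> i) = cmin \<pi> i"
  using cmin_in cmin_orb by blast
lemma cmax_cmin[simp]: "cmax \<pi> (cmin \<pi> i) = cmax \<pi> i"
  using cmin_in cmax_orb by blast

lemma pi_le_cmax: "\<pi> i \<le> cmax \<pi> i"
  using cmax_ge pi_in_orb self_in_orb by blast
lemma cmin_le_pi: "cmin \<pi> i \<le> \<pi> i"
  using cmin_le pi_in_orb self_in_orb by blast

abbreviation NF where "NF \<equiv> {i \<in> {1..m}. \<pi> i \<noteq> i}"

lemma cmin_in_cycmins: assumes "i \<in> {1..m}" "\<pi> i \<noteq> i" shows "cmin \<pi> i \<in> cycmins \<pi> m"
proof -
  have a: "cmin \<pi> i \<in> orb \<pi> i" by (rule cmin_in)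
  have "cmin \<pi> i \<in> {1..m}" using a orb_subset[OF assms(1)] by blast
  moreover have "\<pi> (cmin \<pi> i) \<noteq> cmin \<pi> i" using orb_nonfixed[OF a assms(2)] .
  ultimately show ?thesis unfolding cycmins_def by simp
qed

lemma cycmins_sub: "cycmins \<pi> m \<subseteq> {1..m}"
  unfolding cycmins_def by auto

lemma finite_cycmins[simp]: "finite (cycmins \<pi> m)"
  using cycmins_sub finite_subset by blast

lemma ovl_sym: "(i,j) \<in> ovl \<pi> m \<Longrightarrow> (j,i) \<in> ovl \<pi> m"
  unfolding ovl_def by auto

lemma ovl_rtrancl_sym: "(i,j) \<in> (ovl \<pi> m)\<^sup>* \<Longrightarrow> (j,i) \<in> (ovl \<pi> m)\<^sup>*"
  by (induct rule: rtrancl_induct) (auto intro: converse_rtrancl_into_rtrancl ovl_sym)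

lemma self_in_grp[simp]: "i \<in> grp \<pi> m i"
  unfolding grp_def by simp

lemma grp_sub: "grp \<pi> m i \<subseteq> insert i {1..m}"
proof
  fix j assume "j \<in> grp \<pi> m i"
  then have "(i,j) \<in> (ovl \<pi> m)\<^sup>*" unfolding grp_def by simp
  then show "j \<in> insert i {1..m}"
    by (induct rule: rtrancl_induct) (auto simp: ovl_def)
qed

lemma finite_grp[simp]: "finite (grp \<pi> m i)"
  using grp_sub by (meson finite_atLeastAtMost finite_insert finite_subset)

lemma grp_eq: "j \<in> grp \<pi> m i \<Longrightarrow> grp \<pi> m j = grp \<pi> m i"
  unfolding grp_def using ovl_rtrancl_sym by (blast intro: rtrancl_trans)

lemma grp_nf: "j \<in> grp \<pi> m i \<Longrightarrow> j \<noteq> i \<Longrightarrow> j \<in> NF"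
proof -
  assume "j \<in> grp \<pi> m i" "j \<noteq> i"
  then have "(i,j) \<in> (ovl \<pi> m)\<^sup>*" unfolding grp_def by simp
  then show "j \<noteq> i \<Longrightarrow> j \<in> NF"
    by (induct rule: rtrancl_induct) (auto simp: ovl_def)
qed

lemma ovl_grp: "(i,j) \<in> ovl \<pi> m \<Longrightarrow> j \<in> grp \<pi> m i"
  unfolding grp_def by auto

lemma ovlI: "i \<in> NF \<Longrightarrow> j \<in> NF \<Longrightarrow> cmin \<pi> i \<le> cmax \<pi> j \<Longrightarrow> cmin \<pi> j \<le> cmax \<pi> i
   \<Longrightarrow> (i,j) \<in> ovl \<pi> m"
  by (simp add: ovl_def)

lemma orb_grp: assumes i: "i \<in> NF" and j: "j \<in> orb \<pi> i" shows "j \<in> grp \<pi> m i"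
proof -
  have jNF: "j \<in> NF" using orb_subset[of i] orb_nonfixed[OF j] i j by auto
  have e: "cmin \<pi> j = cmin \<pi> i" "cmax \<pi> j = cmax \<pi> i" using cmin_orb[OF j] cmax_orb[OF j] by auto
  have "cmin \<pi> i \<le> cmax \<pi> i" using cmin_self[of i] cmax_self[of i] by linarith
  then have "(i,j) \<in> ovl \<pi> m" using i jNF e by (intro ovlI) auto
  then show ?thesis by (rule ovl_grp)
qed

lemma gmax_ge: "j \<in> grp \<pi> m i \<Longrightarrow> j \<le> gmax \<pi> m i"
  unfolding gmax_def by simp

lemma gmax_in: "gmax \<pi> m i \<in> grp \<pi> m i"
  unfolding gmax_def using self_in_grp[of i] finite_grp[of i] by (metis Max_in empty_iff)

lemma gmax_self: "i \<le> gmax \<pi> m i" by (simp add: gmax_ge)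

lemma gmax_eq: "j \<in> grp \<pi> m i \<Longrightarrow> gmax \<pi> m j = gmax \<pi> m i"
  unfolding gmax_def using grp_eq by simp

lemma gmax_orb: "i \<in> NF \<Longrightarrow> j \<in> orb \<pi> i \<Longrightarrow> gmax \<pi> m j = gmax \<pi> m i"
  using gmax_eq orb_grp by blast

lemma gmax_pi: "i \<in> NF \<Longrightarrow> gmax \<pi> m (\<pi> i) = gmax \<pi> m i"
  using gmax_orb pi_in_orb self_in_orb by blast

lemma cmax_le_gmax: "i \<in> NF \<Longrightarrow> cmax \<pi> i \<le> gmax \<pi> m i"
  using gmax_ge orb_grp cmax_in by blast

lemma gmax_nf: "i \<in> NF \<Longrightarrow> gmax \<pi> m i \<in> NF"
  using gmax_in grp_nf by (metis)

lemma gmax_cmax: "i \<in> NF \<Longrightarrow> cmax \<pi> (gmax \<pi> m i) = gmax \<pi> m i"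
proof -
  assume i: "i \<in> NF"
  let ?u = "gmax \<pi> m i"
  have u: "?u \<in> NF" using gmax_nf i by blast
  have "cmax \<pi> ?u \<in> grp \<pi> m i"
    using orb_grp[OF u cmax_in] grp_eq gmax_in by blast
  then have "cmax \<pi> ?u \<le> ?u" by (rule gmax_ge)
  then show ?thesis using cmax_self[of ?u] by simp
qed

lemma GL: "i \<in> NF \<Longrightarrow> w \<in> NF \<Longrightarrow> w \<le> gmax \<pi> m i \<Longrightarrow> cmax \<pi> w \<le> gmax \<pi> m i"
proof (rule ccontr)
  assume i: "i \<in> NF" and w: "w \<in> NF" and le: "w \<le> gmax \<pi> m i" and
    nle: "\<not> cmax \<pi> w \<le> gmax \<pi> m i"
  let ?u = "gmax \<pi> m i"
  have u: "?u \<in> NF" using gmax_nf i by blast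
  have "(?u, w) \<in> ovl \<pi> m"
    apply (rule ovlI[OF u w])
    using nle cmin_self[of ?u] apply linarith
    using gmax_cmax[OF i] cmin_self[of w] le by linarith
  then have "w \<in> grp \<pi> m i" using ovl_grp grp_eq gmax_in by blast
  then have "cmax \<pi> w \<in> grp \<pi> m i" using orb_grp[OF w cmax_in] grp_eq by blast
  then show False using nle gmax_ge by blast
qed

end

context lor
begin

lemma grp_le_gmax:
  assumes i: "i \<in> NF" and w: "w \<in> NF" and le: "w \<le> gmax \<pi> m i"
  shows "gmax \<pi> m w \<le> gmax \<pi> m i"
proof -
  define u where "u = gmax \<pi> m i"
  have u: "u \<in> NF" unfolding u_def using gmax_nf i by blast
  have cu: "cmax \<pi> u = u" unfolding u_def using gmax_cmax[OF i] .
  have gu: "grp \<pi> m u = grp \<pi> m i" unfolding u_def by (rule grp_eq[OF gmax_in])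
  have key: "v \<le> u" if "(w,v) \<in> (ovl \<pi> m)\<^sup>*" for v
    using that
  proof (induct rule: rtrancl_induct)
    case base show ?case using le u_def by simp
  next
    case (step a b)
    have a: "a \<in> NF" "b \<in> NF" "cmin \<pi> b \<le> cmax \<pi> a" using step(2) unfolding ovl_def by auto
    have ca: "cmax \<pi> a \<le> u" using GL[OF i a(1)] step(3) u_def by simp
    show "b \<le> u"
    proof (rule ccontr)
      assume nb: "\<not> b \<le> u"
      have "(u, b) \<in> ovl \<pi> m"
      proof (rule ovlI[OF u a(2)])
        show "cmin \<pi> u \<le> cmax \<pi> b" using nb cmin_self[of u] cmax_self[of b] by linarith
        show "cmin \<pi> b \<le> cmax \<pi> u" using a(3) ca cu by linarith
      qed
      then have "b \<in> grp \<pi> m u" by (rule ovl_grp)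
      then have "b \<in> grp \<pi> m i" using gu by simp
      then have "b \<le> u" unfolding u_def by (rule gmax_ge)
      then show False using nb by simp
    qed
  qed
  have "gmax \<pi> m w \<in> grp \<pi> m w" by (rule gmax_in)
  then have "(w, gmax \<pi> m w) \<in> (ovl \<pi> m)\<^sup>*" unfolding grp_def by simp
  then show ?thesis using key u_def by simp
qed

lemma gmax_less: "i \<in> NF \<Longrightarrow> w \<in> NF \<Longrightarrow> gmax \<pi> m i < gmax \<pi> m w \<Longrightarrow> gmax \<pi> m i < w"
  using grp_le_gmax by fastforce

lemma frontier_gmax:
  assumes H: "\<forall>w\<in>NF. cmin \<pi> w \<le> F \<longrightarrow> cmax \<pi> w \<le> F"
  shows "gmax \<pi> m F = F"
proof -
  have "\<forall>v \<in> grp \<pi> m F. v \<le> F"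
  proof
    fix v assume "v \<in> grp \<pi> m F"
    then have "(F,v) \<in> (ovl \<pi> m)\<^sup>*" unfolding grp_def by simp
    then show "v \<le> F"
    proof (induct rule: rtrancl_induct)
      case base then show ?case by simp
    next
      case (step a b)
      have a: "a \<in> NF" and b: "b \<in> NF" using step(2) unfolding ovl_def by auto
      have "cmax \<pi> a \<le> F" using H a cmin_self[of a] step(3) by force
      then have "cmin \<pi> b \<le> F" using step(2) unfolding ovl_def by auto
      then have "cmax \<pi> b \<le> F" using H b by blast
      then show ?case using cmax_self[of b] by linarith
    qed
  qed
  then have "gmax \<pi> m F \<le> F" using gmax_in[of F] by (rule bspec)
  then show ?thesis using gmax_self[of F] by linarith
qed


end


definition cr :: "nat \<Rightarrow> nat \<Rightarrow> nat \<Rightarrow> nat" where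
  "cr k a b = (if min a b \<le> k \<and> k < max a b then 1 else 0)"

fun crs :: "nat \<Rightarrow> nat \<Rightarrow> nat list \<Rightarrow> nat" where
  "crs k x [] = cr k x 1"
| "crs k x (p # ps) = cr k x p + crs k p ps"

lemma path_len_Cons2: "path_len (a # b # xs) = \<bar>real a - real b\<bar> + path_len (b # xs)"
  by (simp add: path_len_def)

lemma path_len_single: "path_len [a] = 0"
  by (simp add: path_len_def)

lemma card_filter_sum: assumes "finite A" shows "card {x\<in>A. P x} = (\<Sum>x\<in>A. if P x then 1 else 0)"
  using sum.inter_filter[OF assms, of "\<lambda>_. 1::nat" P] by simp

lemma abs_cr: assumes "a \<in> {1..m}" "b \<in> {1..m}"
  shows "\<bar>real a - real b\<bar> = real (\<Sum>k\<in>{1..<m}. cr k a b)"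
proof -
  have "(\<Sum>k\<in>{1..<m}. cr k a b) = (\<Sum>k\<in>{min a b..<max a b}. 1)"
    by (rule sum.mono_neutral_cong_right) (use assms in \<open>auto simp: cr_def\<close>)
  also have "\<dots> = max a b - min a b" by simp
  finally show ?thesis by (simp add: max_def min_def of_nat_diff)
qed

lemma path_len_crs:
  "x \<in> {1..m} \<Longrightarrow> set ps \<subseteq> {1..m} \<Longrightarrow>
   path_len (x # ps @ [1]) = real (\<Sum>k\<in>{1..<m}. crs k x ps)"
proof (induct ps arbitrary: x)
  case Nil
  then have "1 \<in> {1..m}" by auto
  then show ?case using Nil abs_cr[of x m 1] by (simp add: path_len_Cons2 path_len_single)
next
  case (Cons p ps)
  have "path_len (x # (p # ps) @ [1]) = \<bar>real x - real p\<bar> + path_len (p # ps @ [1])"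
    by (simp add: path_len_Cons2)
  also have "\<dots> = real (\<Sum>k\<in>{1..<m}. cr k x p) + real (\<Sum>k\<in>{1..<m}. crs k p ps)"
    using Cons abs_cr[of x m p] by simp
  finally show ?case by (simp add: sum.distrib)
qed

lemma pns_alt: "pns p s = ((fst s)(p := snd s), fst s p)"
  by (cases "snd s") (auto simp: pns_def)

lemma run_Cons[simp]: "run (p # ps) s = run ps (pns p s)"
  by (simp add: run_def)

lemma run_Nil[simp]: "run [] s = s"
  by (simp add: run_def)

lemma run_append: "run (as @ bs) s = run bs (run as s)"
  by (simp add: run_def)

lemma run_notin: "j \<notin> set ps \<Longrightarrow> fst (run ps s) j = fst s j"
  by (induct ps arbitrary: s) (auto simp: pns_alt)

definition wt :: "nat \<Rightarrow> nat \<Rightarrow> nat option \<Rightarrow> nat" where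
  "wt k pos v = (case v of None \<Rightarrow> 0 | Some l \<Rightarrow> if (pos \<le> k) = (l \<le> k) then 0 else 1)"

definition phi :: "nat \<Rightarrow> nat \<Rightarrow> lstate \<Rightarrow> nat \<Rightarrow> nat" where
  "phi m k s x = (\<Sum>i\<in>{1..m}. wt k i (fst s i)) + wt k x (snd s)"

lemma phi_pns: assumes "p \<in> {1..m}" shows "phi m k (pns p s) p = phi m k s p"
proof -
  have f: "finite {1..m}" by simp
  have "(\<Sum>i\<in>{1..m}. wt k i (((fst s)(p := snd s)) i)) = wt k p (((fst s)(p := snd s)) p) + (\<Sum>i\<in>{1..m}-{p}. wt k i (((fst s)(p := snd s)) i))"
    by (rule sum.remove[OF f assms])
  also have "(\<Sum>i\<in>{1..m}-{p}. wt k i (((fst s)(p := snd s)) i)) = (\<Sum>i\<in>{1..m}-{p}. wt k i (fst s i))"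
    by (rule sum.cong) auto
  finally have A: "(\<Sum>i\<in>{1..m}. wt k i (((fst s)(p := snd s)) i)) = wt k p (snd s) + (\<Sum>i\<in>{1..m}-{p}. wt k i (fst s i))"
    by simp
  have B: "(\<Sum>i\<in>{1..m}. wt k i (fst s i)) = wt k p (fst s p) + (\<Sum>i\<in>{1..m}-{p}. wt k i (fst s i))"
    by (rule sum.remove[OF f assms])
  show ?thesis unfolding phi_def pns_alt fst_conv snd_conv A B by simp
qed

lemma cr_zero_iff: "cr k a b = 0 \<longleftrightarrow> (a \<le> k) = (b \<le> k)"
  unfolding cr_def by (auto simp: min_def max_def)

lemma wt_move: "wt k x h \<le> cr k x p + wt k p h"
  using cr_zero_iff[of k x p] unfolding wt_def by (cases h) auto

lemma phi_move: "phi m k s x \<le> cr k x p + phi m k s p"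
  unfolding phi_def using wt_move[of k x "snd s" p] by simp

lemma LB_phi: "set ps \<subseteq> {1..m} \<Longrightarrow> phi m k s x \<le> crs k x ps + phi m k (run ps s) 1"
proof (induct ps arbitrary: s x)
  case Nil then show ?case using phi_move[of m k s x 1] by simp
next
  case (Cons p ps)
  have "phi m k s x \<le> cr k x p + phi m k s p" by (rule phi_move)
  also have "\<dots> = cr k x p + phi m k (pns p s) p" using Cons(2) phi_pns by simp
  also have "\<dots> \<le> cr k x p + (crs k p ps + phi m k (run ps (pns p s)) 1)"
    using Cons by simp
  finally show ?case by simp
qed

lemma phi_goal: "phi m k (goal m) x = 0"
  unfolding phi_def goal_def wt_def by simp

lemma crs_visit:
  assumes "1 \<le> k"
  shows "(x \<le> k \<longrightarrow> (\<exists>j\<in>set ps. k < j) \<longrightarrow> 2 \<le> crs k x ps) \<and> (k < x \<longrightarrow> 1 \<le> crs k x ps)"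
proof (induct ps arbitrary: x)
  case Nil then show ?case using assms by (auto simp: cr_def)
next
  case (Cons p ps)
  show ?case
  proof (cases "p \<le> k")
    case True
    then show ?thesis using Cons[of p] by (auto simp: cr_def)
  next
    case False
    then show ?thesis using Cons[of p] by (auto simp: cr_def)
  qed
qed

lemma sum_count_le: "finite A \<Longrightarrow> (\<Sum>i\<in>A. count_list xs i) \<le> length xs"
proof (induct xs)
  case Nil then show ?case by simp
next
  case (Cons x xs)
  have "(\<Sum>i\<in>A. count_list (x # xs) i) = (\<Sum>i\<in>A. (if x = i then 1 else 0) + count_list xs i)"
    by (rule sum.cong) auto
  then have "(\<Sum>i\<in>A. count_list (x # xs) i) = (\<Sum>i\<in>A. (if x = i then 1 else 0)) + (\<Sum>i\<in>A. count_list xs i)"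
    by (simp add: sum.distrib)
  moreover have "(\<Sum>i\<in>A. (if x = i then 1 else 0::nat)) \<le> 1"
    using Cons(2) by (simp add: sum.If_cases)
  ultimately show ?case using Cons by simp
qed

definition lwf :: "nat \<Rightarrow> lstate \<Rightarrow> bool" where
  "lwf m s \<longleftrightarrow> (\<forall>i. i \<notin> {1..m} \<longrightarrow> fst s i = None) \<and>
     (\<forall>i j l. fst s i = Some l \<longrightarrow> fst s j = Some l \<longrightarrow> i = j) \<and>
     (\<forall>l. snd s = Some l \<longrightarrow> (\<forall>i. fst s i \<noteq> Some l))"

lemma lwf_pns: "lwf m s \<Longrightarrow> p \<in> {1..m} \<Longrightarrow> lwf m (pns p s)"
  unfolding lwf_def pns_alt by (auto split: if_splits)

lemma lwf_run: "lwf m s \<Longrightarrow> set ps \<subseteq> {1..m} \<Longrightarrow> lwf m (run ps s)"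
proof (induct ps arbitrary: s)
  case (Cons p ps) then show ?case using lwf_pns[of m s p] by simp
qed simp

context lor
begin

definition ck :: "nat \<Rightarrow> nat" where
  "ck k = card {i\<in>{1..m}. i \<le> k \<and> k < \<pi> i}"

lemma ck_sym: "card {i\<in>{1..m}. k < i \<and> \<pi> i \<le> k} = ck k"
proof -
  let ?S = "{1..m}" and ?A = "{i\<in>{1..m}. i \<le> k}"
  let ?P = "{i\<in>?S. \<pi> i \<in> ?A}"
  have "bij_betw \<pi> ?P ?A"
    unfolding bij_betw_def
  proof
    show "inj_on \<pi> ?P" using inj_pi by (simp add: inj_on_def)
    show "\<pi> ` ?P = ?A"
    proof
      show "\<pi> ` ?P \<subseteq> ?A" by auto
      show "?A \<subseteq> \<pi> ` ?P"
      proof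
        fix a assume a: "a \<in> ?A"
        then have "a \<in> ?S" by auto
        then obtain i where "i \<in> ?S" "\<pi> i = a"
          using perm permutes_image[OF perm] by (metis imageE)
        then show "a \<in> \<pi> ` ?P" using a by auto
      qed
    qed
  qed
  then have cP: "card ?P = card ?A" by (rule bij_betw_same_card)
  have "card ?P = card (?P \<inter> ?A) + card (?P - ?A)"
    by (rule card_Int_Diff) simp
  moreover have "card ?A = card (?A \<inter> ?P) + card (?A - ?P)"
    by (rule card_Int_Diff) simp
  ultimately have "card (?P - ?A) = card (?A - ?P)" using cP by (simp add: Int_commute)
  moreover have "?P - ?A = {i\<in>{1..m}. k < i \<and> \<pi> i \<le> k}"
  proof (rule set_eqI)
    fix i show "i \<in> ?P - ?A \<longleftrightarrow> i \<in> {i\<in>{1..m}. k < i \<and> \<pi> i \<le> k}"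
      using pi_in[of i] by auto
  qed
  moreover have "?A - ?P = {i\<in>{1..m}. i \<le> k \<and> k < \<pi> i}"
  proof (rule set_eqI)
    fix i show "i \<in> ?A - ?P \<longleftrightarrow> i \<in> {i\<in>{1..m}. i \<le> k \<and> k < \<pi> i}"
      using pi_in[of i] by auto
  qed
  ultimately show ?thesis unfolding ck_def by simp
qed

lemma phi_init: "phi m k (init \<pi> m) x = 2 * ck k"
proof -
  have "(\<Sum>i\<in>{1..m}. wt k i (fst (init \<pi> m) i)) = (\<Sum>i\<in>{1..m}. (if (i \<le> k) = (\<pi> i \<le> k) then 0 else 1))"
    unfolding init_def wt_def by simp
  also have "\<dots> = (\<Sum>i\<in>{1..m}. (if (i \<le> k) \<noteq> (\<pi> i \<le> k) then 1 else 0))"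
    by (rule sum.cong) auto
  also have "\<dots> = card {i\<in>{1..m}. (i \<le> k) \<noteq> (\<pi> i \<le> k)}"
    by (rule card_filter_sum[symmetric]) simp
  also have "{i\<in>{1..m}. (i \<le> k) \<noteq> (\<pi> i \<le> k)} = {i\<in>{1..m}. i \<le> k \<and> k < \<pi> i} \<union> {i\<in>{1..m}. k < i \<and> \<pi> i \<le> k}"
    by auto
  also have "card \<dots> = ck k + ck k"
    using ck_sym unfolding ck_def by (subst card_Un_disjoint) auto
  finally show ?thesis unfolding phi_def init_def wt_def by simp
qed

lemma valid_visits: "valid_plan m \<pi> ps \<Longrightarrow> i \<in> NF \<Longrightarrow> i \<in> set ps"
proof (rule ccontr)
  assume v: "valid_plan m \<pi> ps" and i: "i \<in> NF" and n: "i \<notin> set ps"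
  have "fst (run ps (init \<pi> m)) i = fst (init \<pi> m) i" using run_notin n by blast
  then show False using v i unfolding valid_plan_def goal_def init_def by auto
qed

definition LBk :: "nat \<Rightarrow> nat" where
  "LBk k = (if 0 < ck k then 2 * ck k else if (\<exists>j\<in>NF. k < j) then 2 else 0)"

lemma crs_LB: assumes v: "valid_plan m \<pi> ps" and k: "1 \<le> k" shows "LBk k \<le> crs k 1 ps"
proof -
  have s: "set ps \<subseteq> {1..m}" using v unfolding valid_plan_def by simp
  have a: "2 * ck k \<le> crs k 1 ps"
    using LB_phi[OF s, of k "init \<pi> m" 1] phi_init v phi_goal unfolding valid_plan_def by simp
  have b: "(\<exists>j\<in>NF. k < j) \<Longrightarrow> 2 \<le> crs k 1 ps"
    using crs_visit[OF k, of 1 ps] valid_visits[OF v] k by blast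
  show ?thesis unfolding LBk_def using a b by auto
qed

lemma path_len_LB: assumes v: "valid_plan m \<pi> ps"
  shows "real (\<Sum>k\<in>{1..<m}. LBk k) \<le> path_len (1 # ps @ [1])"
proof (cases "m = 0")
  case True
  then have "ps = []" using v unfolding valid_plan_def by auto
  then show ?thesis using True by (simp add: path_len_def)
next
  case False
  have s: "set ps \<subseteq> {1..m}" using v unfolding valid_plan_def by simp
  have "(\<Sum>k\<in>{1..<m}. LBk k) \<le> (\<Sum>k\<in>{1..<m}. crs k 1 ps)"
    by (rule sum_mono) (use crs_LB[OF v] in auto)
  then have "real (\<Sum>k\<in>{1..<m}. LBk k) \<le> real (\<Sum>k\<in>{1..<m}. crs k 1 ps)"
    by (simp only: of_nat_le_iff)
  also have "\<dots> = path_len (1 # ps @ [1])" using path_len_crs[of 1 m ps] s False by simp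
  finally show ?thesis .
qed

lemma init_lwf: "lwf m (init \<pi> m)"
  unfolding lwf_def init_def by auto

lemma orb_NF: assumes y: "y \<in> NF" shows "orb \<pi> y \<subseteq> NF"
proof
  fix i assume i: "i \<in> orb \<pi> y"
  have "i \<in> {1..m}" using orb_subset[of y] y i by auto
  moreover have "\<pi> i \<noteq> i" using orb_nonfixed[OF i] y by auto
  ultimately show "i \<in> NF" by simp
qed

lemma orb_surj: "\<pi> ` orb \<pi> y = orb \<pi> y"
  by (rule endo_inj_surj) (auto simp: pi_in_orb inj_on_def)

lemma count_cycle: assumes v: "valid_plan m \<pi> ps" and y: "y \<in> cycmins \<pi> m"
  shows "card (orb \<pi> y) + 1 \<le> (\<Sum>i\<in>orb \<pi> y. count_list ps i)"
proof -
  have s: "set ps \<subseteq> {1..m}" using v unfolding valid_plan_def by simp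
  have yNF: "y \<in> NF" using y unfolding cycmins_def by auto
  have oNF: "orb \<pi> y \<subseteq> NF" using orb_NF[OF yNF] .
  have vis: "\<forall>i\<in>orb \<pi> y. 1 \<le> count_list ps i"
  proof
    fix i assume i: "i \<in> orb \<pi> y"
    then have "i \<in> set ps" using valid_visits[OF v] oNF by blast
    then show "1 \<le> count_list ps i" using count_list_0_iff[of ps i] by (cases "count_list ps i") auto
  qed
  have "\<exists>z\<in>set ps. z \<in> orb \<pi> y" using valid_visits[OF v yNF] self_in_orb[of y] by blast
  then obtain as z bs where ps: "ps = as @ z # bs" and z: "z \<in> orb \<pi> y"
      and as: "\<forall>a\<in>set as. a \<notin> orb \<pi> y"
    using split_list_first_prop[of ps "\<lambda>a. a \<in> orb \<pi> y"] by (auto simp: Bex_def)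
  have zbs: "z \<in> set bs"
  proof (rule ccontr)
    assume nz: "z \<notin> set bs"
    define s0 where "s0 = run as (init \<pi> m)"
    have l0: "lwf m s0" unfolding s0_def using lwf_run[OF init_lwf] s ps by auto
    obtain w where w: "w \<in> orb \<pi> y" "\<pi> w = z" using orb_surj z by (metis imageE)
    have "fst s0 w = fst (init \<pi> m) w" unfolding s0_def using run_notin as w by blast
    moreover have wm: "w \<in> {1..m}" using oNF w(1) by blast
    ultimately have c0: "fst s0 w = Some z" using w unfolding init_def by simp
    have zm: "z \<in> {1..m}" using oNF z by blast
    have "fst (run ps (init \<pi> m)) z = fst (run bs (pns z s0)) z"
      unfolding ps s0_def by (simp add: run_append)
    also have "\<dots> = fst (pns z s0) z" using run_notin nz by blast
    also have "\<dots> = snd s0" by (simp add: pns_alt)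
    finally have "snd s0 = Some z" using v zm unfolding valid_plan_def goal_def by simp
    then show False using l0 c0 unfolding lwf_def by auto
  qed
  have "1 \<le> count_list bs z" using zbs count_list_0_iff[of bs z] by (cases "count_list bs z") auto
  then have cz: "2 \<le> count_list ps z" unfolding ps by simp
  have "(\<Sum>i\<in>orb \<pi> y. count_list ps i) = count_list ps z + (\<Sum>i\<in>orb \<pi> y - {z}. count_list ps i)"
    using sum.remove[OF finite_orb z] by simp
  moreover have "(\<Sum>i\<in>orb \<pi> y - {z}. count_list ps i) \<ge> (\<Sum>i\<in>orb \<pi> y - {z}. 1)"
    by (rule sum_mono) (use vis in auto)
  moreover have "(\<Sum>i\<in>orb \<pi> y - {z}. (1::nat)) = card (orb \<pi> y) - 1"
    using z by simp
  moreover have "card (orb \<pi> y) \<ge> 1" using z by (auto simp: card_gt_0_iff Suc_le_eq)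
  ultimately show ?thesis using cz by linarith
qed

lemma NF_UN: "NF = (\<Union>y\<in>cycmins \<pi> m. orb \<pi> y)"
proof
  show "NF \<subseteq> (\<Union>y\<in>cycmins \<pi> m. orb \<pi> y)"
  proof
    fix i assume i: "i \<in> NF"
    then have "cmin \<pi> i \<in> cycmins \<pi> m" using cmin_in_cycmins by auto
    moreover have "i \<in> orb \<pi> (cmin \<pi> i)" using orb_eq[OF cmin_in] by simp
    ultimately show "i \<in> (\<Union>y\<in>cycmins \<pi> m. orb \<pi> y)" by blast
  qed
  show "(\<Union>y\<in>cycmins \<pi> m. orb \<pi> y) \<subseteq> NF"
  proof
    fix i assume "i \<in> (\<Union>y\<in>cycmins \<pi> m. orb \<pi> y)"
    then obtain y where y: "y \<in> cycmins \<pi> m" "i \<in> orb \<pi> y" by blast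
    then have "y \<in> NF" unfolding cycmins_def by simp
    then show "i \<in> NF" using orb_NF y by blast
  qed
qed

lemma orb_disj: "y \<in> cycmins \<pi> m \<Longrightarrow> y' \<in> cycmins \<pi> m \<Longrightarrow> y \<noteq> y' \<Longrightarrow> orb \<pi> y \<inter> orb \<pi> y' = {}"
proof (rule ccontr)
  assume y: "y \<in> cycmins \<pi> m" and y': "y' \<in> cycmins \<pi> m" and ne: "y \<noteq> y'" and
    "orb \<pi> y \<inter> orb \<pi> y' \<noteq> {}"
  then obtain i where "i \<in> orb \<pi> y" "i \<in> orb \<pi> y'" by blast
  then have "cmin \<pi> y = cmin \<pi> y'" using cmin_orb by metis
  then show False using y y' ne unfolding cycmins_def by auto
qed

lemma card_NF: "card NF = (\<Sum>y\<in>cycmins \<pi> m. card (orb \<pi> y))"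
  unfolding NF_UN by (rule card_UN_disjoint) (auto simp: orb_disj)

lemma length_LB: assumes v: "valid_plan m \<pi> ps"
  shows "card NF + card (cycmins \<pi> m) \<le> length ps"
proof -
  have "card NF + card (cycmins \<pi> m) = (\<Sum>y\<in>cycmins \<pi> m. card (orb \<pi> y) + 1)"
  proof -
    have "(\<Sum>y\<in>cycmins \<pi> m. card (orb \<pi> y) + 1) = (\<Sum>y\<in>cycmins \<pi> m. card (orb \<pi> y)) + (\<Sum>y\<in>cycmins \<pi> m. 1)"
      by (rule sum.distrib)
    then show ?thesis using card_NF by simp
  qed
  also have "\<dots> \<le> (\<Sum>y\<in>cycmins \<pi> m. \<Sum>i\<in>orb \<pi> y. count_list ps i)"
    by (rule sum_mono) (rule count_cycle[OF v])
  also have "\<dots> = (\<Sum>i\<in>NF. count_list ps i)"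
    unfolding NF_UN by (rule sum.UNION_disjoint[symmetric]) (auto simp: orb_disj)
  also have "\<dots> \<le> length ps" by (rule sum_count_le) simp
  finally show ?thesis .
qed

end

fun lnk :: "(nat \<Rightarrow> nat option) \<Rightarrow> nat list \<Rightarrow> nat option \<Rightarrow> bool" where
  "lnk c [] e = True"
| "lnk c [a] e = (c a = e)"
| "lnk c (a # b # l) e = (c a = Some b \<and> lnk c (b # l) e)"

lemma lnk_append: "lnk c (xs @ b # ys) e \<longleftrightarrow> lnk c xs (Some b) \<and> lnk c (b # ys) e"
proof (induct xs)
  case Nil then show ?case by simp
next
  case (Cons a xs) then show ?case by (cases xs) auto
qed

lemma lnk_upd: "z \<notin> set l \<Longrightarrow> lnk (c(z := v)) l e = lnk c l e"
  by (induct c l e rule: lnk.induct) auto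

lemma lnk_tl: "lnk c (a # l) e \<Longrightarrow> lnk c l e"
  by (cases l) auto

lemma lnk_upt:
  "a \<le> b \<Longrightarrow> (\<forall>j. a \<le> j \<and> j < b \<longrightarrow> c (f j) = Some (f (Suc j))) \<Longrightarrow> c (f b) = e
   \<Longrightarrow> lnk c (map f [a..<Suc b]) e"
proof (induct "b - a" arbitrary: a)
  case 0 then show ?case by simp
next
  case (Suc d)
  then have ab: "a < b" by simp
  have "[a..<Suc b] = a # [Suc a..<Suc b]" using ab by (simp add: upt_conv_Cons)
  moreover have "[Suc a..<Suc b] = Suc a # [Suc (Suc a)..<Suc b]" using ab by (simp add: upt_conv_Cons)
  moreover have "lnk c (map f [Suc a..<Suc b]) e" using Suc by simp
  ultimately show ?case using Suc(4) ab by simp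
qed

lemma sorted_const: "(\<forall>a\<in>set l. f a = C) \<Longrightarrow> sorted_wrt (\<lambda>a b. f b \<le> (f a::nat)) l"
  by (induct l) auto

context lor
begin

definition L :: "nat \<Rightarrow> nat" where "L y = funpow_dist1 \<pi> y y"

definition cyc :: "nat \<Rightarrow> nat list" where
  "cyc y = map (\<lambda>j. (\<pi> ^^ j) y) [1..<Suc (L y)]"

lemma self_orbit: "y \<in> orbit \<pi> y"
  by (rule permutation_self_in_orbit[OF permutation_pi])

lemma funpow_L: "(\<pi> ^^ L y) y = y"
  unfolding L_def by (rule funpow_dist1_prop[OF self_orbit])

lemma L_least: "0 < n \<Longrightarrow> n < L y \<Longrightarrow> (\<pi> ^^ n) y \<noteq> y"
  unfolding L_def by (rule funpow_dist1_least)

lemma L_pos: "0 < L y" unfolding L_def by simp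

lemma orb_L: "orb \<pi> y = (\<lambda>n. (\<pi> ^^ n) y) ` {0..<L y}"
  unfolding orb_orbit L_def by (rule orbit_conv_funpow_dist1[OF self_orbit])

lemma set_cyc: "set (cyc y) = orb \<pi> y"
proof
  show "set (cyc y) \<subseteq> orb \<pi> y" unfolding cyc_def orb_def by auto
  show "orb \<pi> y \<subseteq> set (cyc y)"
  proof
    fix z assume "z \<in> orb \<pi> y"
    then obtain n where n: "n < L y" "z = (\<pi> ^^ n) y" unfolding orb_L by auto
    show "z \<in> set (cyc y)"
    proof (cases "n = 0")
      case True
      then have "z = (\<pi> ^^ L y) y" using n funpow_L by simp
      then show ?thesis unfolding cyc_def using L_pos[of y] by auto
    next
      case False
      then show ?thesis unfolding cyc_def using n by auto
    qed
  qed
qed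

lemma inj_funpow: "inj (\<pi> ^^ n)"
  using inj_fn[OF inj_pi] .

lemma distinct_cyc: "distinct (cyc y)"
  unfolding cyc_def distinct_map
proof
  show "distinct [1..<Suc (L y)]" by simp
  show "inj_on (\<lambda>j. (\<pi> ^^ j) y) (set [1..<Suc (L y)])"
  proof (rule inj_onI)
    fix a b assume a: "a \<in> set [1..<Suc (L y)]" and b: "b \<in> set [1..<Suc (L y)]"
      and e: "(\<pi> ^^ a) y = (\<pi> ^^ b) y"
    have gen: "(\<pi> ^^ a) y = (\<pi> ^^ b) y \<Longrightarrow> 1 \<le> a \<Longrightarrow> a < b \<Longrightarrow> b \<le> L y \<Longrightarrow> False" for a b
    proof -
      assume e: "(\<pi> ^^ a) y = (\<pi> ^^ b) y" and a1: "1 \<le> a" and ab: "a < b" and bL: "b \<le> L y"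
      have "(\<pi> ^^ a) ((\<pi> ^^ (b - a)) y) = (\<pi> ^^ (a + (b - a))) y"
        by (simp add: funpow_add)
      also have "a + (b - a) = b" using ab by simp
      finally have "(\<pi> ^^ a) ((\<pi> ^^ (b - a)) y) = (\<pi> ^^ b) y" .
      then have "(\<pi> ^^ a) ((\<pi> ^^ (b - a)) y) = (\<pi> ^^ a) y" using e by simp
      then have "(\<pi> ^^ (b - a)) y = y" using inj_funpow[of a] by (simp add: inj_eq)
      moreover have "0 < b - a" "b - a < L y" using ab a1 bL by auto
      ultimately show False using L_least by blast
    qed
    show "a = b"
    proof (rule ccontr)
      assume "a \<noteq> b"
      then consider "a < b" | "b < a" by linarith
      then show False
      proof cases
        case 1 then show False using gen[OF e] a b by auto
      next
        case 2 then show False using gen[OF e[symmetric]] a b by auto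
      qed
    qed
  qed
qed

lemma cyc_ne: "cyc y \<noteq> []"
  unfolding cyc_def using L_pos[of y] by simp

lemma hd_cyc: "hd (cyc y) = \<pi> y"
  unfolding cyc_def using L_pos[of y] by (simp add: upt_conv_Cons del: upt_Suc)

lemma last_cyc: "last (cyc y) = y"
  unfolding cyc_def using L_pos[of y] funpow_L[of y] by simp

lemma lnk_cyc:
  assumes "\<forall>j. 1 \<le> j \<and> j < L y \<longrightarrow> c ((\<pi> ^^ j) y) = Some (\<pi> ((\<pi> ^^ j) y))" and "c y = e"
  shows "lnk c (cyc y) e"
  unfolding cyc_def
  by (rule lnk_upt) (use assms L_pos[of y] funpow_L[of y] in auto)

lemma cyc_cells:
  assumes "\<forall>i\<in>orb \<pi> y. i \<noteq> y \<longrightarrow> c i = Some (\<pi> i)" and "c y = e"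
  shows "lnk c (cyc y) e"
proof (rule lnk_cyc)
  show "\<forall>j. 1 \<le> j \<and> j < L y \<longrightarrow> c ((\<pi> ^^ j) y) = Some (\<pi> ((\<pi> ^^ j) y))"
  proof (intro allI impI)
    fix j assume j: "1 \<le> j \<and> j < L y"
    have "(\<pi> ^^ j) y \<in> orb \<pi> y" unfolding orb_def by simp
    moreover have "(\<pi> ^^ j) y \<noteq> y" using L_least j by simp
    ultimately show "c ((\<pi> ^^ j) y) = Some (\<pi> ((\<pi> ^^ j) y))" using assms(1) by blast
  qed
  show "c y = e" by fact
qed

definition Unst :: "nat set \<Rightarrow> nat set" where
  "Unst st = {y \<in> cycmins \<pi> m. y \<notin> st}"

definition y0 :: nat where "y0 = Min (cycmins \<pi> m)"

definition bad :: "lstate \<Rightarrow> nat" where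
  "bad s = card {i\<in>{1..m}. fst s i \<noteq> Some i}"

definition I1 :: "nat set \<Rightarrow> nat \<Rightarrow> bool" where
  "I1 st F \<longleftrightarrow> st \<subseteq> cycmins \<pi> m \<and> (\<forall>y\<in>cycmins \<pi> m. y \<in> st \<longleftrightarrow> y \<le> F)"

definition I2 :: "lstate \<Rightarrow> nat set \<Rightarrow> nat \<Rightarrow> nat list \<Rightarrow> bool" where
  "I2 s st F path \<longleftrightarrow>
    (\<forall>i. i \<notin> {1..m} \<longrightarrow> fst s i = None) \<and>
    (\<forall>i\<in>{1..m}. \<pi> i = i \<longrightarrow> fst s i = Some i \<and> i \<notin> set path) \<and>
    (\<forall>i\<in>{1..m}. \<pi> i \<noteq> i \<longrightarrow> cmin \<pi> i \<notin> st \<longrightarrow> fst s i = Some (\<pi> i) \<and> i \<notin> set path) \<and>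
    (\<forall>i\<in>{1..m}. \<pi> i \<noteq> i \<longrightarrow> cmin \<pi> i \<in> st \<longrightarrow> i \<in> set path \<or> (fst s i = Some i \<and> i \<le> F)) \<and>
    set path \<subseteq> {1..m} \<and>
    (\<forall>i\<in>set path. fst s i \<noteq> Some (\<pi> i) \<longrightarrow> i \<in> st)"

definition I3 :: "lstate \<Rightarrow> nat \<Rightarrow> nat set \<Rightarrow> nat \<Rightarrow> nat list \<Rightarrow> nat \<Rightarrow> bool" where
  "I3 s x st F path g \<longleftrightarrow>
     path \<noteq> [] \<and> hd path = g \<and> distinct path \<and> lnk (fst s) path None \<and> last path = y0 \<and>
     sorted_wrt (\<lambda>a b. gmax \<pi> m b \<le> gmax \<pi> m a) path \<and> x \<in> NF \<and> x \<le> F \<and> st \<noteq> {} \<and>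
     (Unst st \<noteq> {} \<longrightarrow> gmax \<pi> m g = gmax \<pi> m x \<and> F \<le> gmax \<pi> m x) \<and>
     (Unst st \<noteq> {} \<longrightarrow> gmax \<pi> m F = F \<longrightarrow> x = F)"

definition inv :: "lstate \<Rightarrow> nat \<Rightarrow> nat set \<Rightarrow> nat \<Rightarrow> nat list \<Rightarrow> bool" where
  "inv s x st F path \<longleftrightarrow> I1 st F \<and> I2 s st F path \<and>
     (case snd s of
        None \<Rightarrow> path = [] \<and> ((st = {} \<and> x = 1 \<and> F = 0) \<or> (Unst st = {} \<and> st \<noteq> {} \<and> x = y0))
      | Some g \<Rightarrow> I3 s x st F path g)"

definition Bk :: "nat \<Rightarrow> lstate \<Rightarrow> nat \<Rightarrow> nat set \<Rightarrow> nat \<Rightarrow> nat" where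
  "Bk k s x st F = phi m k s x +
     (if y0 \<le> k \<and> ck k = 0 \<and> F \<le> k \<and> (\<exists>y\<in>Unst st. k < y) then 2 else 0) +
     (if k < y0 then (if st = {} then 2 else 1) else 0)"

lemma Unst_fin[simp]: "finite (Unst st)"
  unfolding Unst_def by simp

lemma y0_le: "y \<in> cycmins \<pi> m \<Longrightarrow> y0 \<le> y"
  unfolding y0_def by simp

lemma y0_in: "cycmins \<pi> m \<noteq> {} \<Longrightarrow> y0 \<in> cycmins \<pi> m"
  unfolding y0_def by (rule Min_in) auto

lemma NF_y0: "i \<in> NF \<Longrightarrow> y0 \<le> i"
  using y0_le[OF cmin_in_cycmins[of i]] cmin_self[of i] by auto

lemma cycmins_NF: "y \<in> cycmins \<pi> m \<Longrightarrow> y \<in> NF"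
  unfolding cycmins_def by auto

lemma cycmins_cmin: "y \<in> cycmins \<pi> m \<Longrightarrow> cmin \<pi> y = y"
  unfolding cycmins_def by auto

lemma same_grp: "gmax \<pi> m a = gmax \<pi> m b \<Longrightarrow> b \<in> grp \<pi> m a"
proof -
  assume e: "gmax \<pi> m a = gmax \<pi> m b"
  have "grp \<pi> m (gmax \<pi> m a) = grp \<pi> m a" by (rule grp_eq[OF gmax_in])
  moreover have "grp \<pi> m (gmax \<pi> m b) = grp \<pi> m b" by (rule grp_eq[OF gmax_in])
  ultimately have "grp \<pi> m a = grp \<pi> m b" using e by simp
  then show ?thesis by simp
qed

lemma between_gmax:
  assumes a: "a \<in> NF" and z: "z \<in> NF" and b: "b \<in> NF" and az: "a < z" and zb: "z < b"
    and e: "gmax \<pi> m a = gmax \<pi> m b"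
  shows "gmax \<pi> m z = gmax \<pi> m a"
proof -
  have "z \<le> gmax \<pi> m a" using zb gmax_self[of b] e by simp
  then have le: "gmax \<pi> m z \<le> gmax \<pi> m a" by (rule grp_le_gmax[OF a z])
  show ?thesis
  proof (rule ccontr)
    assume "gmax \<pi> m z \<noteq> gmax \<pi> m a"
    then have "gmax \<pi> m z < gmax \<pi> m a" using le by simp
    then have "gmax \<pi> m z < a" by (rule gmax_less[OF z a])
    then show False using gmax_self[of z] az by simp
  qed
qed

lemma inv_final:
  assumes I: "I2 s st F []" and h: "snd s = None" and U: "Unst st = {}"
  shows "s = goal m"
proof -
  have "fst s = fst (goal m)"
  proof
    fix i show "fst s i = fst (goal m) i"
    proof (cases "i \<in> {1..m}")
      case False then show ?thesis using I unfolding I2_def goal_def by simp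
    next
      case True
      show ?thesis
      proof (cases "\<pi> i = i")
        case True then show ?thesis using I \<open>i \<in> {1..m}\<close> unfolding I2_def goal_def by simp
      next
        case False
        have "cmin \<pi> i \<in> cycmins \<pi> m" using cmin_in_cycmins \<open>i \<in> {1..m}\<close> False by simp
        then have "cmin \<pi> i \<in> st" using U unfolding Unst_def by blast
        then show ?thesis using I \<open>i \<in> {1..m}\<close> False unfolding I2_def goal_def by simp
      qed
    qed
  qed
  then show ?thesis using h unfolding goal_def by (simp add: prod_eq_iff)
qed

lemma inv_init: "inv (init \<pi> m) 1 {} 0 []"
  unfolding inv_def I1_def I2_def init_def
  using cycmins_NF NF_y0 by (auto dest: cycmins_NF)

end

context lor
begin

lemma I2_path: "I2 s st F path \<Longrightarrow> i \<in> set path \<Longrightarrow> i \<in> NF \<and> cmin \<pi> i \<in> st"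
proof -
  assume I: "I2 s st F path" and i: "i \<in> set path"
  have im: "i \<in> {1..m}" using I i unfolding I2_def by blast
  have "\<pi> i \<noteq> i" using I i im unfolding I2_def by blast
  moreover have "cmin \<pi> i \<in> st" using I i im \<open>\<pi> i \<noteq> i\<close> unfolding I2_def by blast
  ultimately show ?thesis using im by simp
qed

lemma Unst_less: "y \<in> Unst st \<Longrightarrow> card (Unst (insert y st)) < card (Unst st)"
proof -
  assume y: "y \<in> Unst st"
  have "Unst (insert y st) = Unst st - {y}" unfolding Unst_def by auto
  then show ?thesis using card_Diff1_less[OF Unst_fin y] by simp
qed

lemma bad_same:
  assumes t: "t \<in> {1..m}" and "fst s t \<noteq> Some t" and "v \<noteq> Some t"
  shows "bad ((fst s)(t := v), h) = bad s"
proof -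
  have "{i\<in>{1..m}. ((fst s)(t := v)) i \<noteq> Some i} = {i\<in>{1..m}. fst s i \<noteq> Some i}"
    using assms by auto
  then show ?thesis unfolding bad_def by simp
qed

lemma bad_dec:
  assumes t: "t \<in> {1..m}" and "fst s t \<noteq> Some t"
  shows "Suc (bad ((fst s)(t := Some t), h)) = bad s"
proof -
  have e: "{i\<in>{1..m}. ((fst s)(t := Some t)) i \<noteq> Some i} = {i\<in>{1..m}. fst s i \<noteq> Some i} - {t}"
    using assms by auto
  have mem: "t \<in> {i\<in>{1..m}. fst s i \<noteq> Some i}" using assms by simp
  have fin: "finite {i\<in>{1..m}. fst s i \<noteq> Some i}" by simp
  show ?thesis unfolding bad_def fst_conv e by (rule card_Suc_Diff1[OF fin mem])
qed

lemma step_start: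
  assumes inv: "inv s x st F path" and h: "snd s = None" and U: "Unst st \<noteq> {}"
  shows "st = {}" "x = 1" "F = 0" "Unst st = cycmins \<pi> m" "y0 \<in> {1..m}"
    "inv (pns y0 s) y0 {y0} y0 (cyc y0)"
    "bad (pns y0 s) = bad s" "card (Unst {y0}) < card (Unst st)"
proof -
  have I1: "I1 st F" and I2: "I2 s st F path" and N: "path = [] \<and> ((st = {} \<and> x = 1 \<and> F = 0) \<or> (Unst st = {} \<and> st \<noteq> {} \<and> x = y0))"
    using inv h unfolding inv_def by auto
  show st: "st = {}" "x = 1" "F = 0" using N U by auto
  show UU: "Unst st = cycmins \<pi> m" unfolding Unst_def st by simp
  have cm: "cycmins \<pi> m \<noteq> {}" using U UU by simp
  have y0: "y0 \<in> cycmins \<pi> m" by (rule y0_in[OF cm])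
  have y0NF: "y0 \<in> NF" using cycmins_NF[OF y0] .
  have cy0: "cmin \<pi> y0 = y0" using cycmins_cmin[OF y0] .
  show y0m: "y0 \<in> {1..m}" using y0NF by simp
  define c where "c = fst s"
  have cells: "\<forall>i\<in>NF. c i = Some (\<pi> i)" using I2 st unfolding I2_def c_def by simp
  have fixd: "\<forall>i\<in>{1..m}. \<pi> i = i \<longrightarrow> c i = Some i" using I2 unfolding I2_def c_def by simp
  have outs: "\<forall>i. i \<notin> {1..m} \<longrightarrow> c i = None" using I2 unfolding I2_def c_def by simp
  have s': "pns y0 s = (c(y0 := None), Some (\<pi> y0))"
    using h cells y0NF unfolding c_def pns_alt by simp
  have orbNF: "orb \<pi> y0 \<subseteq> NF" using orb_NF[OF y0NF] .
  have orb_cmin: "i \<in> orb \<pi> y0 \<longleftrightarrow> cmin \<pi> i = y0" if "i \<in> NF" for i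
  proof
    assume "i \<in> orb \<pi> y0" then have "cmin \<pi> i = cmin \<pi> y0" by (rule cmin_orb)
    then show "cmin \<pi> i = y0" using cy0 by simp
  next
    assume "cmin \<pi> i = y0"
    then show "i \<in> orb \<pi> y0" using orb_eq[OF cmin_in[of i]] by simp
  qed
  have "\<forall>y\<in>cycmins \<pi> m. y \<in> {y0} \<longleftrightarrow> y \<le> y0"
  proof
    fix y assume "y \<in> cycmins \<pi> m" then have "y0 \<le> y" by (rule y0_le)
    then show "y \<in> {y0} \<longleftrightarrow> y \<le> y0" by auto
  qed
  then have "I1 {y0} y0" unfolding I1_def using y0 by simp
  moreover have "I2 (pns y0 s) {y0} y0 (cyc y0)"
    unfolding I2_def s' fst_conv set_cyc
  proof (intro conjI ballI allI impI)
    fix i assume "i \<notin> {1..m}" then show "(c(y0 := None)) i = None" using outs y0m by auto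
  next
    fix i assume "i \<in> {1..m}" "\<pi> i = i"
    then show "(c(y0 := None)) i = Some i" using fixd y0NF by auto
    show "i \<notin> orb \<pi> y0" using orbNF \<open>\<pi> i = i\<close> by auto
  next
    fix i assume i: "i \<in> {1..m}" "\<pi> i \<noteq> i" "cmin \<pi> i \<notin> {y0}"
    then have "i \<noteq> y0" using cy0 by auto
    then show "(c(y0 := None)) i = Some (\<pi> i)" using cells i by simp
    show "i \<notin> orb \<pi> y0" using orb_cmin i by simp
  next
    fix i assume i: "i \<in> {1..m}" "\<pi> i \<noteq> i" "cmin \<pi> i \<in> {y0}"
    then show "i \<in> orb \<pi> y0 \<or> (c(y0 := None)) i = Some i \<and> i \<le> y0" using orb_cmin by simp
  next
    show "orb \<pi> y0 \<subseteq> {1..m}" using orb_subset y0m by simp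
  next
    fix i assume i: "i \<in> orb \<pi> y0" "(c(y0 := None)) i \<noteq> Some (\<pi> i)"
    then show "i \<in> {y0}" using cells orbNF by (cases "i = y0") auto
  qed
  moreover have "I3 (pns y0 s) y0 {y0} y0 (cyc y0) (\<pi> y0)"
    unfolding I3_def
  proof (intro conjI impI)
    show "cyc y0 \<noteq> []" by (rule cyc_ne)
    show "hd (cyc y0) = \<pi> y0" by (rule hd_cyc)
    show "distinct (cyc y0)" by (rule distinct_cyc)
    show "lnk (fst (pns y0 s)) (cyc y0) None"
      unfolding s' fst_conv
    proof (rule cyc_cells)
      show "\<forall>i\<in>orb \<pi> y0. i \<noteq> y0 \<longrightarrow> (c(y0 := None)) i = Some (\<pi> i)"
      proof (intro ballI impI)
        fix i assume "i \<in> orb \<pi> y0" "i \<noteq> y0"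
        then have "i \<in> NF" using orbNF by blast
        then show "(c(y0 := None)) i = Some (\<pi> i)" using cells \<open>i \<noteq> y0\<close> by simp
      qed
      show "(c(y0 := None)) y0 = None" by simp
    qed
    show "last (cyc y0) = y0" by (rule last_cyc)
    show "sorted_wrt (\<lambda>a b. gmax \<pi> m b \<le> gmax \<pi> m a) (cyc y0)"
    proof (rule sorted_const[where C="gmax \<pi> m y0"])
      show "\<forall>a\<in>set (cyc y0). gmax \<pi> m a = gmax \<pi> m y0" unfolding set_cyc using gmax_orb[OF y0NF] by blast
    qed
    show "y0 \<in> NF" by fact
    show "y0 \<le> y0" by simp
    show "{y0} \<noteq> {}" by simp
    show "gmax \<pi> m (\<pi> y0) = gmax \<pi> m y0" by (rule gmax_pi[OF y0NF])
    show "y0 \<le> gmax \<pi> m y0" by (rule gmax_self)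
    show "y0 = y0" by simp
  qed
  ultimately show "inv (pns y0 s) y0 {y0} y0 (cyc y0)" unfolding inv_def using s' by simp
  have "c y0 \<noteq> Some y0" using cells y0NF by simp
  then show "bad (pns y0 s) = bad s" unfolding s' c_def using bad_same[OF y0m] by simp
  have "y0 \<in> Unst st" using UU y0 by simp
  then show "card (Unst {y0}) < card (Unst st)" using Unst_less st by simp
qed


lemma step_park:
  assumes inv: "inv s x st F path" and h: "snd s = Some g" and y: "y \<in> Unst st"
    and ymin: "\<forall>z\<in>Unst st. y \<le> z" and gy: "gmax \<pi> m g \<le> gmax \<pi> m y"
  shows "y \<in> {1..m}" "inv (pns y s) y (insert y st) y (cyc y @ path)"
    "bad (pns y s) = bad s" "card (Unst (insert y st)) < card (Unst st)"
proof -
  have I1: "I1 st F" and I2: "I2 s st F path" and I3: "I3 s x st F path g"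
    using inv h unfolding inv_def by auto
  define c where "c = fst s"
  have ycm: "y \<in> cycmins \<pi> m" and yst: "y \<notin> st" using y unfolding Unst_def by auto
  have yNF: "y \<in> NF" by (rule cycmins_NF[OF ycm])
  have cy: "cmin \<pi> y = y" by (rule cycmins_cmin[OF ycm])
  show ym: "y \<in> {1..m}" using yNF by simp
  have Fy: "F < y" using I1 ycm yst unfolding I1_def by auto
  have outs: "\<forall>i. i \<notin> {1..m} \<longrightarrow> c i = None" using I2 unfolding I2_def c_def by simp
  have fixd: "\<forall>i\<in>{1..m}. \<pi> i = i \<longrightarrow> c i = Some i \<and> i \<notin> set path"
    using I2 unfolding I2_def c_def by simp
  have unst: "\<forall>i\<in>{1..m}. \<pi> i \<noteq> i \<longrightarrow> cmin \<pi> i \<notin> st \<longrightarrow> c i = Some (\<pi> i) \<and> i \<notin> set path"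
    using I2 unfolding I2_def c_def by simp
  have strt: "\<forall>i\<in>{1..m}. \<pi> i \<noteq> i \<longrightarrow> cmin \<pi> i \<in> st \<longrightarrow> i \<in> set path \<or> (c i = Some i \<and> i \<le> F)"
    using I2 unfolding I2_def c_def by simp
  have pathm: "set path \<subseteq> {1..m}" using I2 unfolding I2_def by simp
  have parked: "\<forall>i\<in>set path. c i \<noteq> Some (\<pi> i) \<longrightarrow> i \<in> st" using I2 unfolding I2_def c_def by simp
  have P: "path \<noteq> []" "hd path = g" "distinct path" "lnk c path None" "last path = y0"
    "sorted_wrt (\<lambda>a b. gmax \<pi> m b \<le> gmax \<pi> m a) path" "x \<in> NF" "x \<le> F" "st \<noteq> {}"
    using I3 unfolding I3_def c_def by auto
  obtain rest where pr: "path = g # rest" using P(1,2) by (cases path) auto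
  have cyu: "c y = Some (\<pi> y)" and ynp: "y \<notin> set path" using unst ym yNF cy yst by auto
  have gNF: "g \<in> NF" using I2_path[OF I2] pr by simp
  have gy_ne: "g \<noteq> y" using ynp pr by auto
  have s': "pns y s = (c(y := Some g), Some (\<pi> y))" using h cyu unfolding c_def pns_alt by simp
  have orbNF: "orb \<pi> y \<subseteq> NF" using orb_NF[OF yNF] .
  have orb_cmin: "i \<in> orb \<pi> y \<longleftrightarrow> cmin \<pi> i = y" if "i \<in> NF" for i
  proof
    assume "i \<in> orb \<pi> y" then have "cmin \<pi> i = cmin \<pi> y" by (rule cmin_orb)
    then show "cmin \<pi> i = y" using cy by simp
  next
    assume "cmin \<pi> i = y"
    then show "i \<in> orb \<pi> y" using orb_eq[OF cmin_in[of i]] by simp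
  qed
  have path_st: "cmin \<pi> i \<in> st" if "i \<in> set path" for i using I2_path[OF I2 that] by simp
  have disj: "i \<notin> orb \<pi> y" if "i \<in> set path" for i
  proof
    assume "i \<in> orb \<pi> y"
    then have "cmin \<pi> i = y" using orb_cmin I2_path[OF I2 that] by blast
    then show False using path_st[OF that] yst by simp
  qed
  have orb_cells: "c i = Some (\<pi> i)" if "i \<in> orb \<pi> y" for i
  proof -
    have iNF: "i \<in> NF" using orbNF that by blast
    then have "cmin \<pi> i = y" using orb_cmin that by blast
    then show ?thesis using unst iNF yst by simp
  qed
  have "\<forall>z\<in>cycmins \<pi> m. z \<in> insert y st \<longleftrightarrow> z \<le> y"
  proof
    fix z assume z: "z \<in> cycmins \<pi> m"
    show "z \<in> insert y st \<longleftrightarrow> z \<le> y"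
    proof
      assume "z \<in> insert y st"
      then show "z \<le> y" using I1 z Fy unfolding I1_def by auto
    next
      assume zy: "z \<le> y"
      show "z \<in> insert y st"
      proof (rule ccontr)
        assume "z \<notin> insert y st"
        then have "z \<in> Unst st" "z \<noteq> y" using z unfolding Unst_def by auto
        then show False using ymin zy by force
      qed
    qed
  qed
  then have I1': "I1 (insert y st) y" using I1 ycm unfolding I1_def by simp
  have I2': "I2 (pns y s) (insert y st) y (cyc y @ path)"
    unfolding I2_def s' fst_conv set_append set_cyc
  proof (intro conjI ballI allI impI)
    fix i assume "i \<notin> {1..m}" then show "(c(y := Some g)) i = None" using outs ym by auto
  next
    fix i assume i: "i \<in> {1..m}" "\<pi> i = i"
    then have "i \<noteq> y" using yNF by auto
    then show "(c(y := Some g)) i = Some i" using fixd i by simp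
    show "i \<notin> orb \<pi> y \<union> set path" using orbNF fixd i by auto
  next
    fix i assume i: "i \<in> {1..m}" "\<pi> i \<noteq> i" "cmin \<pi> i \<notin> insert y st"
    then have "i \<noteq> y" using cy by auto
    then show "(c(y := Some g)) i = Some (\<pi> i)" using unst i by simp
    have "i \<notin> orb \<pi> y" using orb_cmin i by simp
    then show "i \<notin> orb \<pi> y \<union> set path" using unst i by simp
  next
    fix i assume i: "i \<in> {1..m}" "\<pi> i \<noteq> i" "cmin \<pi> i \<in> insert y st"
    show "i \<in> orb \<pi> y \<union> set path \<or> (c(y := Some g)) i = Some i \<and> i \<le> y"
    proof (cases "cmin \<pi> i = y")
      case True then show ?thesis using orb_cmin i by simp
    next
      case False
      then have "cmin \<pi> i \<in> st" using i by simp
      then have "i \<in> set path \<or> (c i = Some i \<and> i \<le> F)" using strt i by simp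
      moreover have "c i = Some i \<Longrightarrow> i \<noteq> y" using cyu yNF by auto
      ultimately show ?thesis using Fy by auto
    qed
  next
    show "orb \<pi> y \<union> set path \<subseteq> {1..m}" using orb_subset[OF ym] pathm by simp
  next
    fix i assume i: "i \<in> orb \<pi> y \<union> set path" "(c(y := Some g)) i \<noteq> Some (\<pi> i)"
    show "i \<in> insert y st"
    proof (cases "i = y")
      case True then show ?thesis by simp
    next
      case False
      then have ci: "c i \<noteq> Some (\<pi> i)" using i by simp
      then have "i \<notin> orb \<pi> y" using orb_cells by blast
      then have "i \<in> set path" using i by simp
      then show ?thesis using parked ci by simp
    qed
  qed
  have I3': "I3 (pns y s) y (insert y st) y (cyc y @ path) (\<pi> y)"
    unfolding I3_def
  proof (intro conjI impI)
    show "cyc y @ path \<noteq> []" using cyc_ne by simp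
    show "hd (cyc y @ path) = \<pi> y" using cyc_ne hd_cyc by simp
    show "distinct (cyc y @ path)" using distinct_cyc P(3) disj set_cyc by auto
    show "lnk (fst (pns y s)) (cyc y @ path) None"
      unfolding s' fst_conv pr lnk_append
    proof
      show "lnk (c(y := Some g)) (cyc y) (Some g)"
      proof (rule cyc_cells)
        show "\<forall>i\<in>orb \<pi> y. i \<noteq> y \<longrightarrow> (c(y := Some g)) i = Some (\<pi> i)"
          using orb_cells by simp
        show "(c(y := Some g)) y = Some g" by simp
      qed
      show "lnk (c(y := Some g)) (g # rest) None"
        using lnk_upd[of y "g # rest" c "Some g" None] ynp P(4) pr by simp
    qed
    show "last (cyc y @ path) = y0" using P(1,5) by simp
    have sc: "sorted_wrt (\<lambda>a b. gmax \<pi> m b \<le> gmax \<pi> m a) (cyc y)"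
    proof (rule sorted_const[where C="gmax \<pi> m y"])
      show "\<forall>a\<in>set (cyc y). gmax \<pi> m a = gmax \<pi> m y" unfolding set_cyc using gmax_orb[OF yNF] by blast
    qed
    have hdg: "\<forall>b\<in>set path. gmax \<pi> m b \<le> gmax \<pi> m g" using P(6) pr by auto
    show "sorted_wrt (\<lambda>a b. gmax \<pi> m b \<le> gmax \<pi> m a) (cyc y @ path)"
      unfolding sorted_wrt_append
    proof (intro conjI ballI)
      show "sorted_wrt (\<lambda>a b. gmax \<pi> m b \<le> gmax \<pi> m a) (cyc y)" by (rule sc)
      show "sorted_wrt (\<lambda>a b. gmax \<pi> m b \<le> gmax \<pi> m a) path" by (rule P(6))
      fix a b assume a: "a \<in> set (cyc y)" and b: "b \<in> set path"
      have "gmax \<pi> m a = gmax \<pi> m y" using a unfolding set_cyc using gmax_orb[OF yNF] by blast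
      then show "gmax \<pi> m b \<le> gmax \<pi> m a" using hdg b gy by fastforce
    qed
    show "y \<in> NF" by (rule yNF)
    show "y \<le> y" by simp
    show "insert y st \<noteq> {}" by simp
    show "gmax \<pi> m (\<pi> y) = gmax \<pi> m y" by (rule gmax_pi[OF yNF])
    show "y \<le> gmax \<pi> m y" by (rule gmax_self)
    show "y = y" by simp
  qed
  show "inv (pns y s) y (insert y st) y (cyc y @ path)"
    unfolding inv_def using I1' I2' I3' s' by simp
  have "c y \<noteq> Some y" using cyu yNF by simp
  then show "bad (pns y s) = bad s" unfolding s' c_def using bad_same[OF ym] gy_ne by simp
  show "card (Unst (insert y st)) < card (Unst st)" using Unst_less[OF y] .
qed


lemma no_unst_at_frontier:
  assumes inv: "inv s x st F path" and h: "snd s = Some g"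
    and n2: "\<not> (x = gmax \<pi> m x \<and> {y \<in> cycmins \<pi> m. y \<notin> st \<and> x < y} \<noteq> {})"
    and gF: "gmax \<pi> m F = F"
  shows "Unst st = {}"
proof (rule ccontr)
  assume U: "Unst st \<noteq> {}"
  have I1: "I1 st F" and I3: "I3 s x st F path g" using inv h unfolding inv_def by auto
  have xF: "x = F" using I3 U gF unfolding I3_def by auto
  obtain z where z: "z \<in> Unst st" using U by blast
  have "z \<in> cycmins \<pi> m" "z \<notin> st" using z unfolding Unst_def by auto
  then have "F < z" using I1 unfolding I1_def by auto
  then have "z \<in> {y \<in> cycmins \<pi> m. y \<notin> st \<and> x < y}" using xF \<open>z \<in> cycmins \<pi> m\<close> \<open>z \<notin> st\<close> by simp
  then show False using n2 xF gF by auto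
qed

lemma step_move:
  assumes inv: "inv s x st F path" and h: "snd s = Some g"
    and n2: "\<not> (x = gmax \<pi> m x \<and> {y \<in> cycmins \<pi> m. y \<notin> st \<and> x < y} \<noteq> {})"
    and n3: "\<not> ({y \<in> cycmins \<pi> m. y \<notin> st \<and> y \<in> grp \<pi> m g} \<noteq> {} \<and>
               min x g < Min {y \<in> cycmins \<pi> m. y \<notin> st \<and> y \<in> grp \<pi> m g} \<and>
               Min {y \<in> cycmins \<pi> m. y \<notin> st \<and> y \<in> grp \<pi> m g} < max x g)"
  shows "g \<in> {1..m}" "inv (pns g s) g st (max F g) (tl path)"
    "Suc (bad (pns g s)) = bad s"
proof -
  have I1: "I1 st F" and I2: "I2 s st F path" and I3: "I3 s x st F path g"
    using inv h unfolding inv_def by auto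
  define c where "c = fst s"
  have outs: "\<forall>i. i \<notin> {1..m} \<longrightarrow> c i = None" using I2 unfolding I2_def c_def by simp
  have fixd: "\<forall>i\<in>{1..m}. \<pi> i = i \<longrightarrow> c i = Some i \<and> i \<notin> set path"
    using I2 unfolding I2_def c_def by simp
  have unst: "\<forall>i\<in>{1..m}. \<pi> i \<noteq> i \<longrightarrow> cmin \<pi> i \<notin> st \<longrightarrow> c i = Some (\<pi> i) \<and> i \<notin> set path"
    using I2 unfolding I2_def c_def by simp
  have strt: "\<forall>i\<in>{1..m}. \<pi> i \<noteq> i \<longrightarrow> cmin \<pi> i \<in> st \<longrightarrow> i \<in> set path \<or> (c i = Some i \<and> i \<le> F)"
    using I2 unfolding I2_def c_def by simp
  have pathm: "set path \<subseteq> {1..m}" using I2 unfolding I2_def by simp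
  have parked: "\<forall>i\<in>set path. c i \<noteq> Some (\<pi> i) \<longrightarrow> i \<in> st" using I2 unfolding I2_def c_def by simp
  have P: "path \<noteq> []" "hd path = g" "distinct path" "lnk c path None" "last path = y0"
    "sorted_wrt (\<lambda>a b. gmax \<pi> m b \<le> gmax \<pi> m a) path" "x \<in> NF" "x \<le> F" "st \<noteq> {}"
    using I3 unfolding I3_def c_def by auto
  have P10: "Unst st \<noteq> {} \<Longrightarrow> gmax \<pi> m g = gmax \<pi> m x \<and> F \<le> gmax \<pi> m x"
    and P11: "Unst st \<noteq> {} \<Longrightarrow> gmax \<pi> m F = F \<Longrightarrow> x = F"
    using I3 unfolding I3_def by auto
  obtain rest where pr: "path = g # rest" using P(1,2) by (cases path) auto
  have gNF: "g \<in> NF" and gst: "cmin \<pi> g \<in> st" using I2_path[OF I2] pr by auto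
  show gm: "g \<in> {1..m}" using gNF by simp
  have gnr: "g \<notin> set rest" using P(3) pr by simp
  have hdg: "\<forall>b\<in>set rest. gmax \<pi> m b \<le> gmax \<pi> m g" using P(6) pr by simp
  have gF_le: "g \<le> F" if "c g \<noteq> Some (\<pi> g)"
  proof -
    have "g \<in> st" using parked pr that by simp
    then have "g \<in> cycmins \<pi> m" using I1 unfolding I1_def by auto
    then show ?thesis using I1 \<open>g \<in> st\<close> unfolding I1_def by auto
  qed
  have A: "Unst st = {}" if cond: "rest = [] \<or> gmax \<pi> m (hd rest) \<noteq> gmax \<pi> m g"
  proof (rule no_unst_at_frontier[OF inv h n2])
    have cg: "c g \<noteq> Some (\<pi> g)"
    proof (cases rest)
      case Nil then have "c g = None" using P(4) pr by simp
      then show ?thesis by simp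
    next
      case (Cons r rr)
      then have "c g = Some r" using P(4) pr by simp
      moreover have "gmax \<pi> m r \<noteq> gmax \<pi> m g" using cond Cons by simp
      ultimately show ?thesis using gmax_pi[OF gNF] by auto
    qed
    have gF: "g \<le> F" by (rule gF_le[OF cg])
    have path_le: "v \<le> F" if v: "v \<in> set path" for v
    proof (cases "v = g")
      case True then show ?thesis using gF by simp
    next
      case False
      then have vr: "v \<in> set rest" using v pr by simp
      then obtain r rr where rs: "rest = r # rr" by (cases rest) auto
      have rNF: "r \<in> NF" using I2_path[OF I2] pr rs by simp
      have "gmax \<pi> m r \<le> gmax \<pi> m g" using hdg rs by simp
      moreover have "gmax \<pi> m r \<noteq> gmax \<pi> m g" using cond rs by simp
      ultimately have "gmax \<pi> m r < gmax \<pi> m g" by simp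
      then have rg: "gmax \<pi> m r < g" by (rule gmax_less[OF rNF gNF])
      have "gmax \<pi> m v \<le> gmax \<pi> m r"
      proof (cases "v = r")
        case True then show ?thesis by simp
      next
        case False
        then have "v \<in> set rr" using vr rs by simp
        then show ?thesis using P(6) pr rs by simp
      qed
      then show ?thesis using gmax_self[of v] rg gF by linarith
    qed
    show "gmax \<pi> m F = F"
    proof (rule frontier_gmax, intro ballI impI)
      fix w assume w: "w \<in> NF" and wF: "cmin \<pi> w \<le> F"
      have "cmin \<pi> w \<in> cycmins \<pi> m" using cmin_in_cycmins w by simp
      then have wst: "cmin \<pi> w \<in> st" using I1 wF unfolding I1_def by auto
      let ?v = "cmax \<pi> w"
      have vo: "?v \<in> orb \<pi> w" by (rule cmax_in)
      have vNF: "?v \<in> NF" using orb_NF[OF w] vo by blast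
      have "cmin \<pi> ?v = cmin \<pi> w" using cmin_orb[OF vo] .
      then have "cmin \<pi> ?v \<in> st" using wst by simp
      then have "?v \<in> set path \<or> (c ?v = Some ?v \<and> ?v \<le> F)" using strt vNF by simp
      then show "?v \<le> F" using path_le by auto
    qed
  qed
  show "Suc (bad (pns g s)) = bad s"
  proof -
    have "c g \<noteq> Some g"
    proof (cases rest)
      case Nil then show ?thesis using P(4) pr by simp
    next
      case (Cons r rr) then show ?thesis using P(4) pr gnr by auto
    qed
    moreover have "pns g s = (c(g := Some g), c g)" using h unfolding c_def pns_alt by simp
    ultimately show ?thesis using bad_dec[OF gm] unfolding c_def by simp
  qed
  have s': "pns g s = (c(g := Some g), c g)" using h unfolding c_def pns_alt by simp
  have I1': "I1 st (max F g)"
  proof (cases "g \<le> F")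
    case True then show ?thesis using I1 by (simp add: max_def)
  next
    case False
    have "\<forall>z\<in>cycmins \<pi> m. z \<in> st \<longleftrightarrow> z \<le> g"
    proof
      fix z assume z: "z \<in> cycmins \<pi> m"
      show "z \<in> st \<longleftrightarrow> z \<le> g"
      proof
        assume "z \<in> st" then show "z \<le> g" using I1 z False unfolding I1_def by auto
      next
        assume zg: "z \<le> g"
        show "z \<in> st"
        proof (rule ccontr)
          assume zst: "z \<notin> st"
          then have zU: "z \<in> Unst st" using z unfolding Unst_def by simp
          then have U: "Unst st \<noteq> {}" by blast
          have Fz: "F < z" using I1 z zst unfolding I1_def by auto
          have zNF: "z \<in> NF" using cycmins_NF[OF z] .
          have "z \<noteq> g" using zst gst cycmins_cmin[OF z] by auto
          then have zg': "z < g" using zg by simp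
          have xz: "x < z" using P(8) Fz by simp
          have e: "gmax \<pi> m x = gmax \<pi> m g" using P10[OF U] by simp
          have "gmax \<pi> m z = gmax \<pi> m x" by (rule between_gmax[OF P(7) zNF gNF xz zg' e])
          then have "z \<in> grp \<pi> m g" using same_grp[of g z] e by simp
          then have zin: "z \<in> {y \<in> cycmins \<pi> m. y \<notin> st \<and> y \<in> grp \<pi> m g}" using z zst by simp
          let ?U = "{y \<in> cycmins \<pi> m. y \<notin> st \<and> y \<in> grp \<pi> m g}"
          have fU: "finite ?U" by simp
          have MU: "Min ?U \<in> ?U" using zin fU Min_in by blast
          have "Min ?U \<le> z" using zin fU by simp
          moreover have "F < Min ?U" using MU I1 unfolding I1_def by auto
          ultimately show False using n3 zin xz zg' P(8) by (auto simp: min_def max_def)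
        qed
      qed
    qed
    then show ?thesis using I1 False unfolding I1_def by (simp add: max_def)
  qed
  show "inv (pns g s) g st (max F g) (tl path)"
  proof (cases rest)
    case Nil
    have U: "Unst st = {}" using A Nil by simp
    have cgn: "c g = None" using P(4) pr Nil by simp
    have gy0: "g = y0" using P(5) pr Nil by simp
    have I2': "I2 (pns g s) st (max F g) []"
      unfolding I2_def s' fst_conv
    proof (intro conjI ballI allI impI)
      fix i assume "i \<notin> {1..m}" then show "(c(g := Some g)) i = None" using outs gm by auto
    next
      fix i assume i: "i \<in> {1..m}" "\<pi> i = i"
      then have "i \<noteq> g" using gNF by auto
      then show "(c(g := Some g)) i = Some i" using fixd i by simp
      show "i \<notin> set []" by simp
    next
      fix i assume i: "i \<in> {1..m}" "\<pi> i \<noteq> i" "cmin \<pi> i \<notin> st"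
      have "cmin \<pi> i \<in> cycmins \<pi> m" using cmin_in_cycmins i by simp
      then have False using U i unfolding Unst_def by auto
      then show "(c(g := Some g)) i = Some (\<pi> i)" by simp
      show "i \<notin> set []" by simp
    next
      fix i assume i: "i \<in> {1..m}" "\<pi> i \<noteq> i" "cmin \<pi> i \<in> st"
      show "i \<in> set [] \<or> (c(g := Some g)) i = Some i \<and> i \<le> max F g"
      proof (cases "i = g")
        case True then show ?thesis by simp
      next
        case False
        then have "i \<notin> set path" using pr Nil by simp
        then have "c i = Some i \<and> i \<le> F" using strt i by auto
        then show ?thesis using False by (simp add: max_def)
      qed
    qed simp_all
    show ?thesis unfolding inv_def using I1' I2' U P(9) gy0 s' cgn pr Nil by simp
  next
    case (Cons r rr)
    have cgr: "c g = Some r" using P(4) pr Cons by simp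
    have I2': "I2 (pns g s) st (max F g) rest"
      unfolding I2_def s' fst_conv
    proof (intro conjI ballI allI impI)
      fix i assume "i \<notin> {1..m}" then show "(c(g := Some g)) i = None" using outs gm by auto
    next
      fix i assume i: "i \<in> {1..m}" "\<pi> i = i"
      then have "i \<noteq> g" using gNF by auto
      then show "(c(g := Some g)) i = Some i" using fixd i by simp
      show "i \<notin> set rest" using fixd i pr by auto
    next
      fix i assume i: "i \<in> {1..m}" "\<pi> i \<noteq> i" "cmin \<pi> i \<notin> st"
      then have "i \<noteq> g" using gst by auto
      then show "(c(g := Some g)) i = Some (\<pi> i)" using unst i by simp
      show "i \<notin> set rest" using unst i pr by auto
    next
      fix i assume i: "i \<in> {1..m}" "\<pi> i \<noteq> i" "cmin \<pi> i \<in> st"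
      show "i \<in> set rest \<or> (c(g := Some g)) i = Some i \<and> i \<le> max F g"
      proof (cases "i = g")
        case True then show ?thesis by simp
      next
        case False
        then have "i \<in> set rest \<or> (c i = Some i \<and> i \<le> F)" using strt i pr by auto
        then show ?thesis using False by auto
      qed
    next
      show "set rest \<subseteq> {1..m}" using pathm pr by auto
    next
      fix i assume i: "i \<in> set rest" "(c(g := Some g)) i \<noteq> Some (\<pi> i)"
      then have "i \<noteq> g" using gnr by auto
      then show "i \<in> st" using parked i pr by auto
    qed
    have I3': "I3 (pns g s) g st (max F g) rest r"
      unfolding I3_def s' fst_conv
    proof (intro conjI impI)
      show "rest \<noteq> []" using Cons by simp
      show "hd rest = r" using Cons by simp
      show "distinct rest" using P(3) pr by simp
      have "lnk c rest None" using lnk_tl P(4) pr by blast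
      then show "lnk (c(g := Some g)) rest None" using lnk_upd[OF gnr] by simp
      show "last rest = y0" using P(5) pr Cons by simp
      show "sorted_wrt (\<lambda>a b. gmax \<pi> m b \<le> gmax \<pi> m a) rest" using P(6) pr by simp
      show "g \<in> NF" by (rule gNF)
      show "g \<le> max F g" by simp
      show "st \<noteq> {}" by (rule P(9))
    next
      assume U: "Unst st \<noteq> {}"
      then show "gmax \<pi> m r = gmax \<pi> m g" using A Cons by auto
      show "max F g \<le> gmax \<pi> m g" using P10[OF U] gmax_self[of g] by simp
    next
      assume U: "Unst st \<noteq> {}" and gm': "gmax \<pi> m (max F g) = max F g"
      show "g = max F g"
      proof (rule ccontr)
        assume "g \<noteq> max F g"
        then have "max F g = F" by (simp add: max_def split: if_splits)
        then have "gmax \<pi> m F = F" using gm' by simp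
        then have "Unst st = {}" by (rule no_unst_at_frontier[OF inv h n2])
        then show False using U by simp
      qed
    qed
    show ?thesis unfolding inv_def using I1' I2' I3' s' cgr pr Cons by simp
  qed
qed


lemma phi_side: "phi m k s t + wt k x (snd s) = phi m k s x + wt k t (snd s)"
  unfolding phi_def by simp

lemma cr_01: "cr k a b = 0 \<or> cr k a b = 1"
  unfolding cr_def by simp

lemma phi_prod:
  assumes h: "snd s = Some g" and side: "cr k x t = 1 \<Longrightarrow> (t \<le> k) = (g \<le> k)"
  shows "cr k x t + phi m k s t \<le> phi m k s x"
proof (cases "cr k x t = 0")
  case True
  then have "(x \<le> k) = (t \<le> k)" using cr_zero_iff[of k x t] by simp
  then have "wt k x (snd s) = wt k t (snd s)" unfolding wt_def by (simp split: option.splits)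
  then show ?thesis using phi_side[of k s t x] True by simp
next
  case False
  then have c1: "cr k x t = 1" using cr_01[of k x t] by simp
  have "(x \<le> k) \<noteq> (t \<le> k)" using False cr_zero_iff[of k x t] by simp
  then have "wt k x (snd s) = 1" "wt k t (snd s) = 0" using side[OF c1] h unfolding wt_def by auto
  then show ?thesis using phi_side[of k s t x] c1 by simp
qed

lemma t2_mono:
  "F \<le> F' \<Longrightarrow> Unst st' \<subseteq> Unst st \<Longrightarrow>
   (if y0 \<le> k \<and> ck k = 0 \<and> F' \<le> k \<and> (\<exists>y\<in>Unst st'. k < y) then 2 else 0) \<le>
   (if y0 \<le> k \<and> ck k = 0 \<and> F \<le> k \<and> (\<exists>y\<in>Unst st. k < y) then 2 else (0::nat))"
  by auto

lemma Bk_prod: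
  assumes h: "snd s = Some g" and t: "t \<in> {1..m}" and FF: "F \<le> F'" and UU: "Unst st' \<subseteq> Unst st"
    and st: "st \<noteq> {}" and st': "st' \<noteq> {}"
    and side: "cr k x t = 1 \<Longrightarrow> (t \<le> k) = (g \<le> k)"
  shows "cr k x t + Bk k (pns t s) t st' F' \<le> Bk k s x st F"
proof -
  have "phi m k (pns t s) t = phi m k s t" by (rule phi_pns[OF t])
  moreover have "cr k x t + phi m k s t \<le> phi m k s x" by (rule phi_prod[OF h side])
  moreover note t2_mono[OF FF UU, of k]
  moreover have "(if k < y0 then (if st' = {} then 2 else 1) else 0) = (if k < y0 then (if st = {} then 2 else 1) else (0::nat))"
    using st st' by simp
  ultimately show ?thesis unfolding Bk_def by linarith
qed

lemma Bk_rule2: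
  assumes h: "snd s = Some g" and y: "y \<in> {1..m}" and gx: "g \<le> x" and Fx: "F \<le> x"
    and xy: "x < y" and y0x: "y0 \<le> x" and yU: "y \<in> Unst st" and ck0: "\<forall>k. x \<le> k \<and> k < y \<longrightarrow> ck k = 0"
    and UU: "Unst st' \<subseteq> Unst st" and st: "st \<noteq> {}" and st': "st' \<noteq> {}"
  shows "cr k x y + Bk k (pns y s) y st' y \<le> Bk k s x st F"
proof -
  have pp: "phi m k (pns y s) y = phi m k s y" by (rule phi_pns[OF y])
  have t3: "(if k < y0 then (if st' = {} then 2 else 1) else 0) = (if k < y0 then (if st = {} then 2 else 1) else (0::nat))"
    using st st' by simp
  show ?thesis
  proof (cases "x \<le> k \<and> k < y")
    case True
    then have c1: "cr k x y = 1" unfolding cr_def by simp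
    have "wt k x (snd s) = 0" "wt k y (snd s) = 1" using h gx True unfolding wt_def by auto
    then have "phi m k s y = phi m k s x + 1" using phi_side[of k s y x] by simp
    moreover have "(if y0 \<le> k \<and> ck k = 0 \<and> F \<le> k \<and> (\<exists>y\<in>Unst st. k < y) then 2 else (0::nat)) = 2"
      using True y0x ck0 Fx yU by auto
    moreover have "(if y0 \<le> k \<and> ck k = 0 \<and> y \<le> k \<and> (\<exists>y\<in>Unst st'. k < y) then 2 else (0::nat)) = 0"
      using True by auto
    moreover have "\<not> k < y0" using True y0x by simp
    ultimately show ?thesis unfolding Bk_def pp using c1 t3 by linarith
  next
    case False
    then have c0: "cr k x y = 0" unfolding cr_def using xy by auto
    then have "(x \<le> k) = (y \<le> k)" using cr_zero_iff[of k x y] by simp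
    then have "wt k x (snd s) = wt k y (snd s)" unfolding wt_def by (simp split: option.splits)
    then have "phi m k s y = phi m k s x" using phi_side[of k s y x] by simp
    moreover have "F \<le> y" using Fx xy by simp
    moreover note t2_mono[OF this UU, of k]
    ultimately show ?thesis unfolding Bk_def pp using c0 t3 by linarith
  qed
qed

lemma ck_gap:
  assumes I1: "I1 st F" and x: "x \<in> NF" and gx: "gmax \<pi> m x = x" and Fx: "F \<le> x"
    and ymin: "\<forall>z\<in>{y \<in> cycmins \<pi> m. y \<notin> st \<and> x < y}. y \<le> z"
    and xk: "x \<le> k" and ky: "k < y"
  shows "ck k = 0"
proof -
  have "{i\<in>{1..m}. i \<le> k \<and> k < \<pi> i} = {}"
  proof (rule ccontr)
    assume "{i\<in>{1..m}. i \<le> k \<and> k < \<pi> i} \<noteq> {}"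
    then obtain i where i: "i \<in> {1..m}" "i \<le> k" "k < \<pi> i" by blast
    then have iNF: "i \<in> NF" by auto
    let ?a = "cmin \<pi> i"
    have acm: "?a \<in> cycmins \<pi> m" using cmin_in_cycmins iNF by simp
    have aNF: "?a \<in> NF" using cycmins_NF[OF acm] .
    have cmx: "cmax \<pi> ?a = cmax \<pi> i" by simp
    show False
    proof (cases "?a \<le> x")
      case True
      then have "?a \<le> gmax \<pi> m x" using gx by simp
      then have "cmax \<pi> ?a \<le> gmax \<pi> m x" by (rule GL[OF x aNF])
      then show False using cmx pi_le_cmax[of i] i gx xk by linarith
    next
      case False
      show False
      proof (cases "?a \<in> st")
        case True
        then have "?a \<le> F" using I1 acm unfolding I1_def by auto
        then show False using False Fx by simp
      next
        case nst: False
        then have "y \<le> ?a" using ymin acm False by auto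
        then show False using cmin_self[of i] i ky by linarith
      qed
    qed
  qed
  then show ?thesis unfolding ck_def by simp
qed

definition good :: "nat list \<Rightarrow> lstate \<Rightarrow> nat \<Rightarrow> nat set \<Rightarrow> nat \<Rightarrow> bool" where
  "good xs s x st F \<longleftrightarrow> set xs \<subseteq> {1..m} \<and> run xs s = goal m \<and>
     length xs \<le> bad s + card (Unst st) \<and> (\<forall>k. 1 \<le> k \<longrightarrow> crs k x xs \<le> Bk k s x st F)"

lemma good_cons:
  assumes t: "t \<in> {1..m}" and g: "good xs (pns t s) t st' F'"
    and meas: "bad (pns t s) + card (Unst st') < bad s + card (Unst st)"
    and B: "\<forall>k. 1 \<le> k \<longrightarrow> cr k x t + Bk k (pns t s) t st' F' \<le> Bk k s x st F"
  shows "good (t # xs) s x st F"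
  unfolding good_def
proof (intro conjI allI impI)
  show "set (t # xs) \<subseteq> {1..m}" using t g unfolding good_def by simp
  show "run (t # xs) s = goal m" using g unfolding good_def by simp
  show "length (t # xs) \<le> bad s + card (Unst st)" using g meas unfolding good_def by simp
  fix k :: nat assume k: "1 \<le> k"
  have "crs k t xs \<le> Bk k (pns t s) t st' F'" using g k unfolding good_def by simp
  then show "crs k x (t # xs) \<le> Bk k s x st F" using B k by fastforce
qed


theorem opt_main:
  "inv s x st F path \<Longrightarrow> bad s + card (Unst st) < n \<Longrightarrow> good (opt_run n \<pi> m s x st) s x st F"
proof (induct n arbitrary: s x st F path)
  case 0 then show ?case by simp
next
  case (Suc n)
  note inv = Suc.prems(1) and meas = Suc.prems(2)
  have I1: "I1 st F" and I2: "I2 s st F path" using inv unfolding inv_def by auto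
  show ?case
  proof (cases "snd s")
    case None
    have N: "path = [] \<and> ((st = {} \<and> x = 1 \<and> F = 0) \<or> (Unst st = {} \<and> st \<noteq> {} \<and> x = y0))"
      using inv None unfolding inv_def by simp
    show ?thesis
    proof (cases "Unst st = {}")
      case True
      have e: "opt_run (Suc n) \<pi> m s x st = []" using None True unfolding Unst_def by simp
      have sg: "s = goal m" using inv_final[of s st F] I2 N None True by simp
      have "crs k x [] \<le> Bk k s x st F" if k: "1 \<le> k" for k
      proof (cases "x = 1")
        case True then show ?thesis by (simp add: cr_def)
      next
        case False
        then have "st \<noteq> {}" "x = y0" using N by auto
        then show ?thesis unfolding Bk_def using k by (auto simp: cr_def)
      qed
      then show ?thesis unfolding good_def e using sg by simp
    next
      case False
      note S = step_start[OF inv None False]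
      have e: "opt_run (Suc n) \<pi> m s x st = y0 # opt_run n \<pi> m (pns y0 s) y0 {y0}"
        using None False S(1) unfolding Unst_def y0_def by (simp add: Let_def)
      have g: "good (opt_run n \<pi> m (pns y0 s) y0 {y0}) (pns y0 s) y0 {y0} y0"
        by (rule Suc.hyps[OF S(6)]) (use S(7,8) meas in simp)
      have B: "\<forall>k. 1 \<le> k \<longrightarrow> cr k x y0 + Bk k (pns y0 s) y0 {y0} y0 \<le> Bk k s x st F"
      proof (intro allI impI)
        fix k :: nat assume k: "1 \<le> k"
        have y0m: "y0 \<in> {1..m}" by (rule S(5))
        have pp: "phi m k (pns y0 s) y0 = phi m k s y0" by (rule phi_pns[OF y0m])
        have "phi m k s y0 = phi m k s x" using phi_side[of k s y0 x] None unfolding wt_def by simp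
        moreover have "Unst {y0} \<subseteq> Unst st" unfolding Unst_def using S(1) by auto
        moreover have "cr k x y0 = (if k < y0 then 1 else 0)" using S(2) k y0m unfolding cr_def by auto
        ultimately show "cr k x y0 + Bk k (pns y0 s) y0 {y0} y0 \<le> Bk k s x st F"
          unfolding Bk_def pp using S(1,3) by auto
      qed
      show ?thesis unfolding e
        by (rule good_cons[OF S(5) g _ B]) (use S(7,8) in simp)
    qed
  next
    case (Some g)
    have I3: "I3 s x st F path g" using inv Some unfolding inv_def by simp
    have P: "path \<noteq> []" "hd path = g" "x \<in> NF" "x \<le> F" "st \<noteq> {}"
      using I3 unfolding I3_def by auto
    have P10: "Unst st \<noteq> {} \<Longrightarrow> gmax \<pi> m g = gmax \<pi> m x \<and> F \<le> gmax \<pi> m x"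
      using I3 unfolding I3_def by auto
    have gNF: "g \<in> NF" using I2_path[OF I2, of g] P(1,2) by (cases path) auto
    have unst_gt: "F < z" if "z \<in> Unst st" for z using that I1 unfolding Unst_def I1_def by auto
    define R where "R = {y \<in> cycmins \<pi> m. y \<notin> st \<and> x < y}"
    define U where "U = {y \<in> cycmins \<pi> m. y \<notin> st \<and> y \<in> grp \<pi> m g}"
    have fR: "finite R" unfolding R_def by simp
    have fU: "finite U" unfolding U_def by simp
    have RU: "R \<subseteq> Unst st" "U \<subseteq> Unst st" unfolding R_def U_def Unst_def by auto
    have e0: "opt_run (Suc n) \<pi> m s x st =
      (if x = gmax \<pi> m x \<and> R \<noteq> {} then Min R # opt_run n \<pi> m (pns (Min R) s) (Min R) (insert (Min R) st)
       else if U \<noteq> {} \<and> min x g < Min U \<and> Min U < max x g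
            then Min U # opt_run n \<pi> m (pns (Min U) s) (Min U) (insert (Min U) st)
            else g # opt_run n \<pi> m (pns g s) g st)"
      by (simp only: opt_run.simps(2) Let_def Some option.case R_def U_def)
    show ?thesis
    proof (cases "x = gmax \<pi> m x \<and> R \<noteq> {}")
      case True
      define y where "y = Min R"
      have e: "opt_run (Suc n) \<pi> m s x st = y # opt_run n \<pi> m (pns y s) y (insert y st)"
        using e0 True unfolding y_def by simp
      have yR: "y \<in> R" unfolding y_def using True fR Min_in by blast
      have yU: "y \<in> Unst st" using yR RU by blast
      have Une: "Unst st \<noteq> {}" using yU by blast
      have xy: "x < y" using yR unfolding R_def by simp
      have Fx: "F \<le> x" using P10[OF Une] True by simp
      have ymin: "\<forall>z\<in>Unst st. y \<le> z"
      proof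
        fix z assume z: "z \<in> Unst st"
        then have "z \<in> R" using unst_gt[OF z] Fx P(4) unfolding R_def Unst_def by auto
        then show "y \<le> z" unfolding y_def using fR by simp
      qed
      have yNF: "y \<in> NF" using yU cycmins_NF unfolding Unst_def by auto
      have gx: "gmax \<pi> m g = x" using P10[OF Une] True by simp
      have gy: "gmax \<pi> m g \<le> gmax \<pi> m y" using gx xy gmax_self[of y] by simp
      note S = step_park[OF inv Some yU ymin gy]
      have g: "good (opt_run n \<pi> m (pns y s) y (insert y st)) (pns y s) y (insert y st) y"
        by (rule Suc.hyps[OF S(2)]) (use S(3,4) meas in simp)
      have ck0: "\<forall>k. x \<le> k \<and> k < y \<longrightarrow> ck k = 0"
      proof (intro allI impI)
        fix k assume "x \<le> k \<and> k < y"
        moreover have "\<forall>z\<in>R. y \<le> z" unfolding y_def using fR by simp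
        ultimately show "ck k = 0" using ck_gap[OF I1 P(3) True[THEN conjunct1, symmetric] Fx] unfolding R_def by blast
      qed
      have B: "\<forall>k. 1 \<le> k \<longrightarrow> cr k x y + Bk k (pns y s) y (insert y st) y \<le> Bk k s x st F"
      proof (intro allI impI)
        fix k :: nat assume k: "1 \<le> k"
        show "cr k x y + Bk k (pns y s) y (insert y st) y \<le> Bk k s x st F"
        proof (rule Bk_rule2[OF Some S(1) _ Fx xy _ yU ck0 _ P(5)])
          show "g \<le> x" using gmax_self[of g] gx by simp
          show "y0 \<le> x" using NF_y0[OF P(3)] .
          show "Unst (insert y st) \<subseteq> Unst st" unfolding Unst_def by auto
          show "insert y st \<noteq> {}" by simp
        qed
      qed
      show ?thesis unfolding e
        by (rule good_cons[OF S(1) g _ B]) (use S(3,4) in simp)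
    next
      case n2: False
      show ?thesis
      proof (cases "U \<noteq> {} \<and> min x g < Min U \<and> Min U < max x g")
        case True
        define y where "y = Min U"
        have e: "opt_run (Suc n) \<pi> m s x st = y # opt_run n \<pi> m (pns y s) y (insert y st)"
          using e0 True n2 unfolding y_def by simp
        have yUU: "y \<in> U" unfolding y_def using True fU Min_in by blast
        have yU: "y \<in> Unst st" using yUU RU by blast
        have Une: "Unst st \<noteq> {}" using yU by blast
        have Fy: "F < y" using unst_gt[OF yU] .
        have xy: "x < y" using Fy P(4) by simp
        have yg: "y < g" using True xy unfolding y_def by (auto simp: max_def split: if_splits)
        have egx: "gmax \<pi> m x = gmax \<pi> m g" using P10[OF Une] by simp
        have ymin: "\<forall>z\<in>Unst st. y \<le> z"
        proof
          fix z assume z: "z \<in> Unst st"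
          show "y \<le> z"
          proof (rule ccontr)
            assume "\<not> y \<le> z"
            then have zy: "z < y" by simp
            have zNF: "z \<in> NF" using z cycmins_NF unfolding Unst_def by auto
            have xz: "x < z" using unst_gt[OF z] P(4) by simp
            have "gmax \<pi> m z = gmax \<pi> m x"
              by (rule between_gmax[OF P(3) zNF gNF xz _ egx]) (use zy yg in simp)
            then have "z \<in> grp \<pi> m g" using same_grp[of g z] egx by simp
            then have "z \<in> U" using z unfolding U_def Unst_def by simp
            then have "y \<le> z" unfolding y_def using fU by simp
            then show False using zy by simp
          qed
        qed
        have yNF: "y \<in> NF" using yU cycmins_NF unfolding Unst_def by auto
        have "y \<in> grp \<pi> m g" using yUU unfolding U_def by simp
        then have gy: "gmax \<pi> m g \<le> gmax \<pi> m y" using gmax_eq by simp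
        note S = step_park[OF inv Some yU ymin gy]
        have g: "good (opt_run n \<pi> m (pns y s) y (insert y st)) (pns y s) y (insert y st) y"
          by (rule Suc.hyps[OF S(2)]) (use S(3,4) meas in simp)
        have B: "\<forall>k. 1 \<le> k \<longrightarrow> cr k x y + Bk k (pns y s) y (insert y st) y \<le> Bk k s x st F"
        proof (intro allI impI)
          fix k :: nat assume k: "1 \<le> k"
          show "cr k x y + Bk k (pns y s) y (insert y st) y \<le> Bk k s x st F"
          proof (rule Bk_prod[OF Some S(1) _ _ P(5)])
            show "F \<le> y" using Fy by simp
            show "Unst (insert y st) \<subseteq> Unst st" unfolding Unst_def by auto
            show "insert y st \<noteq> {}" by simp
            assume "cr k x y = 1"
            then have "x \<le> k \<and> k < y" using xy unfolding cr_def by (auto split: if_splits)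
            then show "(y \<le> k) = (g \<le> k)" using yg by simp
          qed
        qed
        show ?thesis unfolding e
          by (rule good_cons[OF S(1) g _ B]) (use S(3,4) in simp)
      next
        case n3: False
        have e: "opt_run (Suc n) \<pi> m s x st = g # opt_run n \<pi> m (pns g s) g st"
          using e0 n3 n2 by simp
        have n2': "\<not> (x = gmax \<pi> m x \<and> {y \<in> cycmins \<pi> m. y \<notin> st \<and> x < y} \<noteq> {})"
          using n2 unfolding R_def .
        have n3': "\<not> ({y \<in> cycmins \<pi> m. y \<notin> st \<and> y \<in> grp \<pi> m g} \<noteq> {} \<and>
               min x g < Min {y \<in> cycmins \<pi> m. y \<notin> st \<and> y \<in> grp \<pi> m g} \<and>
               Min {y \<in> cycmins \<pi> m. y \<notin> st \<and> y \<in> grp \<pi> m g} < max x g)"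
          using n3 unfolding U_def .
        note S = step_move[OF inv Some n2' n3']
        have g: "good (opt_run n \<pi> m (pns g s) g st) (pns g s) g st (max F g)"
          by (rule Suc.hyps[OF S(2)]) (use S(3) meas in simp)
        have B: "\<forall>k. 1 \<le> k \<longrightarrow> cr k x g + Bk k (pns g s) g st (max F g) \<le> Bk k s x st F"
        proof (intro allI impI)
          fix k :: nat assume k: "1 \<le> k"
          show "cr k x g + Bk k (pns g s) g st (max F g) \<le> Bk k s x st F"
            by (rule Bk_prod[OF Some S(1) _ _ P(5) P(5)]) auto
        qed
        show ?thesis unfolding e
          by (rule good_cons[OF S(1) g _ B]) (use S(3) in simp)
      qed
    qed
  qed
qed

end

context lor
begin

lemma bad_init: "bad (init \<pi> m) = card NF"
proof -
  have "{i\<in>{1..m}. fst (init \<pi> m) i \<noteq> Some i} = NF" unfolding init_def by auto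
  then show ?thesis unfolding bad_def by simp
qed

lemma Unst_empty: "Unst {} = cycmins \<pi> m" unfolding Unst_def by simp

lemma card_NF_le: "card NF \<le> m"
proof -
  have "card NF \<le> card {1..m}" by (rule card_mono) auto
  then show ?thesis by simp
qed

lemma card_cm_le: "card (cycmins \<pi> m) \<le> m"
proof -
  have "card (cycmins \<pi> m) \<le> card {1..m}" by (rule card_mono[OF _ cycmins_sub]) simp
  then show ?thesis by simp
qed

lemma opt_good: "good (opt_plan \<pi> m) (init \<pi> m) 1 {} 0"
  unfolding opt_plan_def
  by (rule opt_main[OF inv_init]) (use card_NF_le card_cm_le in \<open>simp add: bad_init Unst_empty\<close>)

lemma opt_valid: "valid_plan m \<pi> (opt_plan \<pi> m)"
  using opt_good unfolding good_def valid_plan_def by simp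

lemma opt_length: "length (opt_plan \<pi> m) \<le> card NF + card (cycmins \<pi> m)"
  using opt_good unfolding good_def by (simp add: bad_init Unst_empty)

lemma Bk_init_le:
  assumes cm: "cycmins \<pi> m \<noteq> {}" and k: "1 \<le> k"
  shows "Bk k (init \<pi> m) 1 {} 0 \<le> LBk k"
proof -
  have y0: "y0 \<in> cycmins \<pi> m" by (rule y0_in[OF cm])
  have y0NF: "y0 \<in> NF" by (rule cycmins_NF[OF y0])
  have B: "Bk k (init \<pi> m) 1 {} 0 = 2 * ck k + (if y0 \<le> k \<and> ck k = 0 \<and> (\<exists>y\<in>cycmins \<pi> m. k < y) then 2 else 0)
      + (if k < y0 then 2 else 0)"
    unfolding Bk_def phi_init Unst_empty by simp
  show ?thesis
  proof (cases "0 < ck k")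
    case True
    then have "{i\<in>{1..m}. i \<le> k \<and> k < \<pi> i} \<noteq> {}" unfolding ck_def by (metis card.empty less_irrefl)
    then obtain i where i: "i \<in> {1..m}" "i \<le> k" "k < \<pi> i" by blast
    then have "i \<in> NF" by auto
    then have "y0 \<le> k" using NF_y0 i by fastforce
    then show ?thesis unfolding B LBk_def using True by simp
  next
    case False
    then have ck0: "ck k = 0" by simp
    show ?thesis
    proof (cases "k < y0")
      case True
      then have "\<exists>j\<in>NF. k < j" using y0NF by blast
      then show ?thesis unfolding B LBk_def using ck0 True by simp
    next
      case nk: False
      have "(\<exists>y\<in>cycmins \<pi> m. k < y) \<Longrightarrow> (\<exists>j\<in>NF. k < j)" using cycmins_NF by blast
      then show ?thesis unfolding B LBk_def using ck0 nk by auto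
    qed
  qed
qed

lemma cm_empty_NF: "cycmins \<pi> m = {} \<Longrightarrow> NF = {}"
  using cmin_in_cycmins by blast

lemma path_len_nonneg: "0 \<le> path_len xs"
  unfolding path_len_def by (rule sum_list_nonneg) auto

lemma opt_path_len:
  assumes v: "valid_plan m \<pi> ps"
  shows "path_len (1 # opt_plan \<pi> m @ [1]) \<le> path_len (1 # ps @ [1])"
proof (cases "cycmins \<pi> m = {}")
  case True
  have nf: "NF = {}" by (rule cm_empty_NF[OF True])
  have "length (opt_plan \<pi> m) \<le> card NF + card (cycmins \<pi> m)" by (rule opt_length)
  also have "card NF + card (cycmins \<pi> m) = 0" unfolding nf True by (simp only: card.empty add_0)
  finally have "opt_plan \<pi> m = []" by simp
  then show ?thesis using path_len_nonneg[of "1 # ps @ [1]"] by (simp add: path_len_def)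
next
  case False
  show ?thesis
  proof (cases "m = 0")
    case True
    then have "ps = []" "opt_plan \<pi> m = []" using v opt_valid unfolding valid_plan_def by auto
    then show ?thesis by simp
  next
    case m0: False
    have s1: "set (opt_plan \<pi> m) \<subseteq> {1..m}" using opt_valid unfolding valid_plan_def by simp
    have s2: "set ps \<subseteq> {1..m}" using v unfolding valid_plan_def by simp
    have "(\<Sum>k\<in>{1..<m}. crs k 1 (opt_plan \<pi> m)) \<le> (\<Sum>k\<in>{1..<m}. crs k 1 ps)"
    proof (rule sum_mono)
      fix k assume "k \<in> {1..<m}"
      then have k: "1 \<le> k" by simp
      have "crs k 1 (opt_plan \<pi> m) \<le> Bk k (init \<pi> m) 1 {} 0" using opt_good k unfolding good_def by simp
      also have "\<dots> \<le> LBk k" by (rule Bk_init_le[OF False k])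
      also have "\<dots> \<le> crs k 1 ps" by (rule crs_LB[OF v k])
      finally show "crs k 1 (opt_plan \<pi> m) \<le> crs k 1 ps" .
    qed
    then have "real (\<Sum>k\<in>{1..<m}. crs k 1 (opt_plan \<pi> m)) \<le> real (\<Sum>k\<in>{1..<m}. crs k 1 ps)"
      by (simp only: of_nat_le_iff)
    then show ?thesis using path_len_crs[of 1 m "opt_plan \<pi> m"] path_len_crs[of 1 m ps] s1 s2 m0
      by simp
  qed
qed

theorem opt_optimal:
  assumes cp: "0 \<le> cp" and ct: "0 \<le> ct" and v: "valid_plan m \<pi> ps"
  shows "cost cp ct (opt_plan \<pi> m) \<le> cost cp ct ps"
proof -
  have "length (opt_plan \<pi> m) \<le> length ps" using opt_length length_LB[OF v] by simp
  then have a: "real (length (opt_plan \<pi> m)) * cp \<le> real (length ps) * cp"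
    using cp by (simp add: mult_right_mono)
  have b: "path_len (1 # opt_plan \<pi> m @ [1]) * ct \<le> path_len (1 # ps @ [1]) * ct"
    using opt_path_len[OF v] ct by (simp add: mult_right_mono)
  show ?thesis unfolding cost_def using a b by simp
qed

lemma opt_cost_eq:
  assumes cp: "0 \<le> cp" and ct: "0 \<le> ct"
  shows "opt_cost cp ct m \<pi> = cost cp ct (opt_plan \<pi> m)"
  unfolding opt_cost_def
  by (rule cInf_eq_minimum) (use opt_valid opt_optimal[OF cp ct] in auto)

definition Dsum :: real where "Dsum = (\<Sum>i\<in>{1..m}. \<bar>real i - real (\<pi> i)\<bar>)"

lemma sum_cr_ck: "(\<Sum>i\<in>{1..m}. cr k i (\<pi> i)) = 2 * ck k"
proof -
  have "(\<Sum>i\<in>{1..m}. cr k i (\<pi> i)) = (\<Sum>i\<in>{1..m}. if min i (\<pi> i) \<le> k \<and> k < max i (\<pi> i) then 1 else 0)"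
    unfolding cr_def by (rule refl)
  also have "\<dots> = card {i\<in>{1..m}. min i (\<pi> i) \<le> k \<and> k < max i (\<pi> i)}"
    by (rule card_filter_sum[symmetric]) simp
  also have "{i\<in>{1..m}. min i (\<pi> i) \<le> k \<and> k < max i (\<pi> i)} =
      {i\<in>{1..m}. i \<le> k \<and> k < \<pi> i} \<union> {i\<in>{1..m}. k < i \<and> \<pi> i \<le> k}"
    by (auto simp: min_def max_def)
  also have "card \<dots> = ck k + ck k"
    using ck_sym unfolding ck_def by (subst card_Un_disjoint) auto
  finally show ?thesis by simp
qed

lemma Dsum_ck: "Dsum = real (\<Sum>k\<in>{1..<m}. 2 * ck k)"
proof -
  have "Dsum = (\<Sum>i\<in>{1..m}. real (\<Sum>k\<in>{1..<m}. cr k i (\<pi> i)))"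
    unfolding Dsum_def by (rule sum.cong) (use abs_cr pi_in in auto)
  also have "\<dots> = real (\<Sum>i\<in>{1..m}. \<Sum>k\<in>{1..<m}. cr k i (\<pi> i))" by simp
  also have "(\<Sum>i\<in>{1..m}. \<Sum>k\<in>{1..<m}. cr k i (\<pi> i)) = (\<Sum>k\<in>{1..<m}. \<Sum>i\<in>{1..m}. cr k i (\<pi> i))"
    by (rule sum.swap)
  also have "\<dots> = (\<Sum>k\<in>{1..<m}. 2 * ck k)" by (rule sum.cong[OF refl]) (rule sum_cr_ck)
  finally show ?thesis .
qed

lemma cost_ge_D:
  assumes cp: "0 \<le> cp" and ct: "0 \<le> ct" and v: "valid_plan m \<pi> ps"
  shows "ct * Dsum \<le> cost cp ct ps"
proof -
  have "(\<Sum>k\<in>{1..<m}. 2 * ck k) \<le> (\<Sum>k\<in>{1..<m}. LBk k)"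
    by (rule sum_mono) (auto simp: LBk_def)
  then have "Dsum \<le> real (\<Sum>k\<in>{1..<m}. LBk k)" unfolding Dsum_ck by (simp only: of_nat_le_iff)
  also have "\<dots> \<le> path_len (1 # ps @ [1])" by (rule path_len_LB[OF v])
  finally have "ct * Dsum \<le> ct * path_len (1 # ps @ [1])" using ct by (simp add: mult_left_mono)
  moreover have "0 \<le> real (length ps) * cp" using cp by simp
  ultimately show ?thesis unfolding cost_def by (simp add: mult.commute)
qed

end

fun crs0 :: "nat \<Rightarrow> nat \<Rightarrow> nat list \<Rightarrow> nat" where
  "crs0 k x [] = 0"
| "crs0 k x (p # ps) = cr k x p + crs0 k p ps"

lemma crs_append: "crs k x (ps @ qs) = crs0 k x ps + crs k (last (x # ps)) qs"
  by (induct ps arbitrary: x) auto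

lemma follow_path:
  "lnk (fst s) p None \<Longrightarrow> distinct p \<Longrightarrow> p \<noteq> [] \<Longrightarrow> snd s = Some (hd p) \<Longrightarrow> last p = y \<Longrightarrow>
   length p \<le> n \<Longrightarrow>
   sw_follow n y s = p \<and> run p s = ((\<lambda>z. if z \<in> set p then Some z else fst s z), None)"
proof (induct p arbitrary: s n)
  case Nil then show ?case by simp
next
  case (Cons a p)
  obtain n' where n: "n = Suc n'" using Cons.prems(6) by (cases n) auto
  show ?case
  proof (cases p)
    case Nil
    have ay: "a = y" using Cons.prems(5) Nil by simp
    have ca: "fst s a = None" using Cons.prems(1) Nil by simp
    have "sw_follow n y s = [a]" using n Cons.prems(4) ay by simp
    moreover have "run [a] s = ((\<lambda>z. if z \<in> set [a] then Some z else fst s z), None)"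
      using ca Cons.prems(4) by (auto simp: pns_alt)
    ultimately show ?thesis using Nil by simp
  next
    case (Cons b rest)
    note pb = Cons
    have ay: "a \<noteq> y" using Cons.prems(2,5) pb by (metis distinct.simps(2) last.simps last_in_set list.distinct(1))
    have cab: "fst s a = Some b" using Cons.prems(1) pb by simp
    define s' where "s' = pns a s"
    have s'e: "s' = ((fst s)(a := Some a), Some b)" unfolding s'_def pns_alt using cab Cons.prems(4) by simp
    have anp: "a \<notin> set p" using Cons.prems(2) by simp
    have l': "lnk (fst s') p None" using lnk_tl[OF Cons.prems(1)] lnk_upd[OF anp] s'e by simp
    have IH: "sw_follow n' y s' = p \<and> run p s' = ((\<lambda>z. if z \<in> set p then Some z else fst s' z), None)"
      using Cons.hyps[OF l'] Cons.prems(2,3,5,6) pb s'e n by simp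
    have "sw_follow n y s = a # sw_follow n' y s'" using n Cons.prems(4) ay unfolding s'_def by simp
    moreover have "run (a # p) s = run p s'" unfolding s'_def by simp
    moreover have "(\<lambda>z. if z \<in> set p then Some z else fst s' z) = (\<lambda>z. if z \<in> set (a # p) then Some z else fst s z)"
      using s'e by auto
    ultimately show ?thesis using IH by simp
  qed
qed

context lor
begin

lemma follow_phi:
  "lnk (fst s) p None \<Longrightarrow> distinct p \<Longrightarrow> p \<noteq> [] \<Longrightarrow> snd s = Some (hd p) \<Longrightarrow> set p \<subseteq> {1..m} \<Longrightarrow>
   crs0 k x p + phi m k (run p s) (last p) \<le> phi m k s x"
proof (induct p arbitrary: s x)
  case Nil then show ?case by simp
next
  case (Cons a p)
  have am: "a \<in> {1..m}" using Cons.prems(5) by simp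
  have c1: "cr k x a + phi m k s a \<le> phi m k s x"
    by (rule phi_prod[OF Cons.prems(4)]) simp
  have pp: "phi m k (pns a s) a = phi m k s a" by (rule phi_pns[OF am])
  show ?case
  proof (cases p)
    case Nil
    then show ?thesis using c1 pp by simp
  next
    case (Cons b rest)
    note pb = Cons
    have cab: "fst s a = Some b" using Cons.prems(1) pb by simp
    define s' where "s' = pns a s"
    have s'e: "s' = ((fst s)(a := Some a), Some b)" unfolding s'_def pns_alt using cab Cons.prems(4) by simp
    have anp: "a \<notin> set p" using Cons.prems(2) by simp
    have l': "lnk (fst s') p None" using lnk_tl[OF Cons.prems(1)] lnk_upd[OF anp] s'e by simp
    have IH: "crs0 k a p + phi m k (run p s') (last p) \<le> phi m k s' a"
      using Cons.hyps[OF l'] Cons.prems(2,5) pb s'e by simp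
    have "crs0 k x (a # p) = cr k x a + crs0 k a p" by simp
    moreover have "run (a # p) s = run p s'" unfolding s'_def by simp
    moreover have "last (a # p) = last p" using pb by simp
    ultimately show ?thesis using IH c1 pp unfolding s'_def by simp
  qed
qed


definition stP :: "nat set \<Rightarrow> lstate" where
  "stP P = ((\<lambda>j. if j \<in> {1..m} then Some (if \<pi> j \<noteq> j \<and> cmin \<pi> j \<notin> P then \<pi> j else j) else None), None)"

lemma stP_empty: "stP {} = init \<pi> m"
  unfolding stP_def init_def by (auto intro!: ext)

lemma stP_goal: assumes "cycmins \<pi> m \<subseteq> P" shows "stP P = goal m"
proof -
  have "fst (stP P) = fst (goal m)"
  proof
    fix j show "fst (stP P) j = fst (goal m) j"
    proof (cases "j \<in> {1..m} \<and> \<pi> j \<noteq> j")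
      case True
      then have "cmin \<pi> j \<in> P" using cmin_in_cycmins assms by blast
      then show ?thesis using True unfolding stP_def goal_def by simp
    next
      case False then show ?thesis unfolding stP_def goal_def by auto
    qed
  qed
  then show ?thesis unfolding stP_def goal_def by (simp add: prod_eq_iff)
qed

lemma length_cyc: "length (cyc y) = card (orb \<pi> y)"
  using distinct_card[OF distinct_cyc[of y]] set_cyc by simp

lemma sweep_loop:
  "P \<subseteq> cycmins \<pi> m \<Longrightarrow> card (cycmins \<pi> m - P) < n \<Longrightarrow> x \<in> {1..m} \<Longrightarrow> (\<forall>y\<in>cycmins \<pi> m - P. x \<le> y) \<Longrightarrow>
   set (sw_loop n m (stP P)) \<subseteq> {1..m} \<and> run (sw_loop n m (stP P)) (stP P) = goal m \<and>
   length (sw_loop n m (stP P)) \<le> card {j\<in>NF. cmin \<pi> j \<notin> P} + card (cycmins \<pi> m - P) \<and>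
   (\<forall>k. 1 \<le> k \<longrightarrow> crs k x (sw_loop n m (stP P)) \<le> phi m k (stP P) x + (if k < x then 1 else 0) +
       (if x \<le> k \<and> (\<exists>y\<in>cycmins \<pi> m - P. k < y) then 2 else 0))"
proof (induct n arbitrary: P x)
  case 0 then show ?case by simp
next
  case (Suc n)
  note Psub = Suc.prems(1) and meas = Suc.prems(2) and xm = Suc.prems(3) and xle = Suc.prems(4)
  define c where "c = fst (stP P)"
  define B where "B = {i \<in> {1..m}. fst (stP P) i \<noteq> Some i}"
  have Beq: "B = {j\<in>NF. cmin \<pi> j \<notin> P}" unfolding B_def stP_def by auto
  show ?case
  proof (cases "cycmins \<pi> m - P = {}")
    case True
    then have "B = {}" unfolding Beq using cmin_in_cycmins by blast
    then have e: "sw_loop (Suc n) m (stP P) = []" unfolding B_def by (simp add: Let_def)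
    have sg: "stP P = goal m" using True by (intro stP_goal) blast
    show ?thesis unfolding e
    proof (intro conjI allI impI)
      fix k :: nat assume k: "1 \<le> k"
      have "crs k x [] \<le> (if k < x then 1 else 0)" using k xm by (auto simp: cr_def)
      then show "crs k x [] \<le> phi m k (stP P) x + (if k < x then 1 else 0) +
       (if x \<le> k \<and> (\<exists>y\<in>cycmins \<pi> m - P. k < y) then 2 else 0)" by linarith
    qed (use sg in simp_all)
  next
    case False
    define y where "y = Min (cycmins \<pi> m - P)"
    have yin: "y \<in> cycmins \<pi> m - P" unfolding y_def using False by (intro Min_in) auto
    have ymin: "\<forall>z\<in>cycmins \<pi> m - P. y \<le> z" unfolding y_def by simp
    have yNF: "y \<in> NF" using yin cycmins_NF by blast
    have cy: "cmin \<pi> y = y" using yin cycmins_cmin by blast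
    have ym: "y \<in> {1..m}" using yNF by simp
    have yB: "y \<in> B" unfolding Beq using yNF cy yin by simp
    have MB: "Min B = y"
    proof (rule antisym)
      show "Min B \<le> y" using yB unfolding B_def by simp
      have fB: "finite B" unfolding B_def by simp
      have "Min B \<in> B" using yB fB Min_in by blast
      then have mb: "Min B \<in> NF" "cmin \<pi> (Min B) \<notin> P" unfolding Beq by auto
      then have "cmin \<pi> (Min B) \<in> cycmins \<pi> m - P" using cmin_in_cycmins by simp
      then have "y \<le> cmin \<pi> (Min B)" using ymin by blast
      then show "y \<le> Min B" using cmin_self[of "Min B"] by linarith
    qed
    have Bne: "B \<noteq> {}" using yB by blast
    define s1 where "s1 = pns y (stP P)"
    have cellsP: "c i = Some (\<pi> i)" if "i \<in> orb \<pi> y" for i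
    proof -
      have iNF: "i \<in> NF" using orb_NF[OF yNF] that by blast
      have "cmin \<pi> i = y" using cmin_orb[OF that] cy by simp
      then show ?thesis unfolding c_def stP_def using iNF yin by simp
    qed
    have s1e: "s1 = (c(y := None), Some (\<pi> y))"
    proof -
      have "snd (stP P) = None" by (simp add: stP_def)
      then have "s1 = (c(y := None), c y)" unfolding s1_def pns_alt c_def by simp
      then show ?thesis using cellsP[OF self_in_orb] by simp
    qed
    have lnk1: "lnk (fst s1) (cyc y) None"
      unfolding s1e fst_conv
    proof (rule cyc_cells)
      show "\<forall>i\<in>orb \<pi> y. i \<noteq> y \<longrightarrow> (c(y := None)) i = Some (\<pi> i)" using cellsP by simp
    qed simp
    have lc: "length (cyc y) \<le> Suc m"
    proof -
      have "card (orb \<pi> y) \<le> card {1..m}" by (rule card_mono) (use orb_subset[OF ym] in auto)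
      then show ?thesis using length_cyc by simp
    qed
    have F: "sw_follow (Suc m) y s1 = cyc y \<and> run (cyc y) s1 = ((\<lambda>z. if z \<in> set (cyc y) then Some z else fst s1 z), None)"
      by (rule follow_path[OF lnk1 distinct_cyc cyc_ne _ last_cyc lc]) (simp add: s1e hd_cyc)
    define P' where "P' = insert y P"
    have runc: "run (cyc y) s1 = stP P'"
    proof -
      have "(\<lambda>z. if z \<in> set (cyc y) then Some z else fst s1 z) = fst (stP P')"
      proof
        fix z
        show "(if z \<in> set (cyc y) then Some z else fst s1 z) = fst (stP P') z"
        proof (cases "z \<in> orb \<pi> y")
          case True
          then have "z \<in> {1..m}" using orb_subset[OF ym] by blast
          moreover have "cmin \<pi> z = y" using cmin_orb[OF True] cy by simp
          ultimately show ?thesis using True unfolding set_cyc stP_def P'_def by simp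
        next
          case False
          then have "z \<noteq> y" by auto
          moreover have "z \<in> NF \<Longrightarrow> cmin \<pi> z \<noteq> y"
          proof
            assume "z \<in> NF" "cmin \<pi> z = y"
            then have "z \<in> orb \<pi> y" using orb_eq[OF cmin_in[of z]] by simp
            then show False using False by simp
          qed
          ultimately show ?thesis using False unfolding set_cyc s1e c_def stP_def P'_def by auto
        qed
      qed
      then show ?thesis using F unfolding stP_def by simp
    qed
    have e: "sw_loop (Suc n) m (stP P) = y # cyc y @ sw_loop n m (stP P')"
      using Bne MB F runc unfolding B_def s1_def by (simp add: Let_def)
    have P'sub: "P' \<subseteq> cycmins \<pi> m" using Psub yin unfolding P'_def by simp
    have cd: "cycmins \<pi> m - P' = (cycmins \<pi> m - P) - {y}" unfolding P'_def by auto
    have cdl: "card (cycmins \<pi> m - P') < card (cycmins \<pi> m - P)"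
      unfolding cd using card_Diff1_less[OF _ yin] by simp
    have yle: "\<forall>z\<in>cycmins \<pi> m - P'. y \<le> z" using ymin unfolding cd by simp
    have IH': "set (sw_loop n m (stP P')) \<subseteq> {1..m} \<and> run (sw_loop n m (stP P')) (stP P') = goal m \<and>
       length (sw_loop n m (stP P')) \<le> card {j\<in>NF. cmin \<pi> j \<notin> P'} + card (cycmins \<pi> m - P') \<and>
       (\<forall>k. 1 \<le> k \<longrightarrow> crs k y (sw_loop n m (stP P')) \<le> phi m k (stP P') y + (if k < y then 1 else 0) +
       (if y \<le> k \<and> (\<exists>y'\<in>cycmins \<pi> m - P'. k < y') then 2 else 0))"
      using Suc.hyps[OF P'sub _ ym yle] cdl meas by simp
    have setc: "set (cyc y) \<subseteq> {1..m}" using set_cyc orb_subset[OF ym] by simp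
    have NFsplit: "{j\<in>NF. cmin \<pi> j \<notin> P} = orb \<pi> y \<union> {j\<in>NF. cmin \<pi> j \<notin> P'}"
    proof
      show "{j\<in>NF. cmin \<pi> j \<notin> P} \<subseteq> orb \<pi> y \<union> {j\<in>NF. cmin \<pi> j \<notin> P'}"
      proof
        fix j assume j: "j \<in> {j\<in>NF. cmin \<pi> j \<notin> P}"
        show "j \<in> orb \<pi> y \<union> {j\<in>NF. cmin \<pi> j \<notin> P'}"
        proof (cases "cmin \<pi> j = y")
          case True
          then have "j \<in> orb \<pi> y" using orb_eq[OF cmin_in[of j]] by simp
          then show ?thesis by simp
        next
          case False then show ?thesis using j unfolding P'_def by simp
        qed
      qed
      show "orb \<pi> y \<union> {j\<in>NF. cmin \<pi> j \<notin> P'} \<subseteq> {j\<in>NF. cmin \<pi> j \<notin> P}"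
      proof
        fix j assume j: "j \<in> orb \<pi> y \<union> {j\<in>NF. cmin \<pi> j \<notin> P'}"
        show "j \<in> {j\<in>NF. cmin \<pi> j \<notin> P}"
        proof (cases "j \<in> orb \<pi> y")
          case True
          then have "j \<in> NF" using orb_NF[OF yNF] by blast
          moreover have "cmin \<pi> j = y" using cmin_orb[OF True] cy by simp
          ultimately show ?thesis using yin by simp
        next
          case False then show ?thesis using j unfolding P'_def by simp
        qed
      qed
    qed
    have disj: "orb \<pi> y \<inter> {j\<in>NF. cmin \<pi> j \<notin> P'} = {}"
      using cmin_orb cy unfolding P'_def by fastforce
    have cardNF: "card {j\<in>NF. cmin \<pi> j \<notin> P} = card (orb \<pi> y) + card {j\<in>NF. cmin \<pi> j \<notin> P'}"
      unfolding NFsplit by (rule card_Un_disjoint) (use disj in auto)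
    have cardcm: "card (cycmins \<pi> m - P) = Suc (card (cycmins \<pi> m - P'))"
      unfolding cd using card_Suc_Diff1[OF _ yin] by simp
    show ?thesis
    proof (intro conjI allI impI)
      show "set (sw_loop (Suc n) m (stP P)) \<subseteq> {1..m}" unfolding e using IH' setc ym by auto
      show "run (sw_loop (Suc n) m (stP P)) (stP P) = goal m"
        unfolding e using IH' runc unfolding s1_def by (simp add: run_append)
      show "length (sw_loop (Suc n) m (stP P)) \<le> card {j\<in>NF. cmin \<pi> j \<notin> P} + card (cycmins \<pi> m - P)"
        unfolding e cardNF cardcm using IH' length_cyc by simp
      fix k :: nat assume k: "1 \<le> k"
      have ph0: "phi m k (stP P) y = phi m k (stP P) x" using phi_side[of k "stP P" y x]
        unfolding stP_def wt_def by simp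
      have ph1: "phi m k s1 y = phi m k (stP P) y" unfolding s1_def by (rule phi_pns[OF ym])
      have fp: "crs0 k y (cyc y) + phi m k (stP P') y \<le> phi m k s1 y"
        using follow_phi[OF lnk1 distinct_cyc cyc_ne _ setc, of k y] runc last_cyc
        by (simp add: s1e hd_cyc)
      have xy: "x \<le> y" using xle yin by blast
      have crxy: "cr k x y = (if x \<le> k \<and> k < y then 1 else 0)" using xy unfolding cr_def by auto
      have IHk: "crs k y (sw_loop n m (stP P')) \<le> phi m k (stP P') y + (if k < y then 1 else 0) +
       (if y \<le> k \<and> (\<exists>y'\<in>cycmins \<pi> m - P'. k < y') then 2 else 0)" using IH' k by simp
      have ex: "(\<exists>y'\<in>cycmins \<pi> m - P'. k < y') \<Longrightarrow> (\<exists>y'\<in>cycmins \<pi> m - P. k < y')"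
        unfolding cd by blast
      have "crs k x (sw_loop (Suc n) m (stP P)) = cr k x y + crs0 k y (cyc y) + crs k y (sw_loop n m (stP P'))"
        unfolding e using last_cyc[of y] cyc_ne[of y] by (simp add: crs_append)
      also have "\<dots> \<le> phi m k (stP P) x + (if k < x then 1 else 0) +
       (if x \<le> k \<and> (\<exists>y\<in>cycmins \<pi> m - P. k < y) then 2 else 0)"
        using crxy IHk fp ph0 ph1 ex yin xy by (auto split: if_splits)
      finally show "crs k x (sw_loop (Suc n) m (stP P)) \<le> phi m k (stP P) x + (if k < x then 1 else 0) +
       (if x \<le> k \<and> (\<exists>y\<in>cycmins \<pi> m - P. k < y) then 2 else 0)" .
    qed
  qed
qed

end

context lor
begin

lemma sweep_props:
  assumes m1: "1 \<le> m"
  shows "valid_plan m \<pi> (sweep_plan \<pi> m)"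
    "length (sweep_plan \<pi> m) \<le> card NF + card (cycmins \<pi> m)"
    "\<And>k. 1 \<le> k \<Longrightarrow> crs k 1 (sweep_plan \<pi> m) \<le> 2 * ck k + 2"
proof -
  have A: "set (sw_loop (Suc m) m (stP {})) \<subseteq> {1..m} \<and> run (sw_loop (Suc m) m (stP {})) (stP {}) = goal m \<and>
   length (sw_loop (Suc m) m (stP {})) \<le> card {j\<in>NF. cmin \<pi> j \<notin> {}} + card (cycmins \<pi> m - {}) \<and>
   (\<forall>k. 1 \<le> k \<longrightarrow> crs k 1 (sw_loop (Suc m) m (stP {})) \<le> phi m k (stP {}) 1 + (if k < 1 then 1 else 0) +
       (if 1 \<le> k \<and> (\<exists>y\<in>cycmins \<pi> m - {}. k < y) then 2 else 0))"
  proof (rule sweep_loop)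
    show "\<forall>y\<in>cycmins \<pi> m - {}. 1 \<le> y" using cycmins_sub by auto
  qed (use m1 card_cm_le in auto)
  have sp: "sweep_plan \<pi> m = sw_loop (Suc m) m (stP {})" unfolding sweep_plan_def stP_empty ..
  show "valid_plan m \<pi> (sweep_plan \<pi> m)" using A unfolding sp valid_plan_def stP_empty by simp
  show "length (sweep_plan \<pi> m) \<le> card NF + card (cycmins \<pi> m)" using A unfolding sp by simp
  fix k :: nat assume k: "1 \<le> k"
  have "crs k 1 (sweep_plan \<pi> m) \<le> phi m k (stP {}) 1 + (if k < 1 then 1 else 0) +
       (if 1 \<le> k \<and> (\<exists>y\<in>cycmins \<pi> m - {}. k < y) then 2 else 0)" using A k unfolding sp by blast
  also have "\<dots> \<le> 2 * ck k + 2" unfolding stP_empty phi_init using k by simp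
  finally show "crs k 1 (sweep_plan \<pi> m) \<le> 2 * ck k + 2" .
qed

lemma Dsum_nonneg: "0 \<le> Dsum" unfolding Dsum_def by (rule sum_nonneg) simp

lemma sweep_cost_le:
  assumes cp: "0 \<le> cp" and ct: "0 \<le> ct"
  shows "cost cp ct (sweep_plan \<pi> m) \<le> 2 * real m * cp + ct * (Dsum + 2 * real m)"
proof (cases "m = 0")
  case True
  then have "sweep_plan \<pi> m = []" unfolding sweep_plan_def init_def by (simp add: Let_def)
  then show ?thesis using Dsum_nonneg ct True by (simp add: cost_def path_len_def)
next
  case False
  then have m1: "1 \<le> m" by simp
  note S = sweep_props[OF m1]
  have l: "real (length (sweep_plan \<pi> m)) \<le> 2 * real m"
    using S(2) card_NF_le card_cm_le by linarith
  have s: "set (sweep_plan \<pi> m) \<subseteq> {1..m}" using S(1) unfolding valid_plan_def by simp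
  have "(\<Sum>k\<in>{1..<m}. crs k 1 (sweep_plan \<pi> m)) \<le> (\<Sum>k\<in>{1..<m}. 2 * ck k + 2)"
    by (rule sum_mono) (use S(3) in simp)
  also have "\<dots> = (\<Sum>k\<in>{1..<m}. 2 * ck k) + (\<Sum>k\<in>{1..<m}. 2)" by (rule sum.distrib)
  also have "(\<Sum>k\<in>{1..<m}. (2::nat)) = 2 * (m - 1)" by simp
  finally have "real (\<Sum>k\<in>{1..<m}. crs k 1 (sweep_plan \<pi> m)) \<le> real ((\<Sum>k\<in>{1..<m}. 2 * ck k) + 2 * (m - 1))"
    by (simp only: of_nat_le_iff)
  then have pl: "path_len (1 # sweep_plan \<pi> m @ [1]) \<le> Dsum + 2 * real m"
    using path_len_crs[of 1 m "sweep_plan \<pi> m"] s m1 Dsum_ck by (simp add: of_nat_diff)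
  have "cost cp ct (sweep_plan \<pi> m) = real (length (sweep_plan \<pi> m)) * cp + path_len (1 # sweep_plan \<pi> m @ [1]) * ct"
    unfolding cost_def ..
  also have "\<dots> \<le> (2 * real m) * cp + (Dsum + 2 * real m) * ct"
    by (intro add_mono mult_right_mono l pl cp ct)
  finally show ?thesis by (simp add: mult.commute)
qed

lemma opt_le_sweep:
  assumes cp: "0 \<le> cp" and ct: "0 \<le> ct"
  shows "opt_cost cp ct m \<pi> \<le> cost cp ct (sweep_plan \<pi> m)"
proof (cases "m = 0")
  case True
  then have "sweep_plan \<pi> m = []" unfolding sweep_plan_def init_def by (simp add: Let_def)
  moreover have "valid_plan m \<pi> []" using True unfolding valid_plan_def init_def goal_def by auto
  ultimately show ?thesis unfolding opt_cost_eq[OF cp ct] using opt_optimal[OF cp ct] by simp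
next
  case False
  then show ?thesis unfolding opt_cost_eq[OF cp ct]
    using opt_optimal[OF cp ct sweep_props(1)] by simp
qed

lemma opt_ge_D:
  assumes cp: "0 \<le> cp" and ct: "0 \<le> ct"
  shows "ct * Dsum \<le> opt_cost cp ct m \<pi>"
  unfolding opt_cost_eq[OF cp ct] by (rule cost_ge_D[OF cp ct opt_valid])

end

context lor begin
lemma Dsum_eq: "Dsum = (\<Sum>i\<in>{1..m}. \<bar>real i - real (\<pi> i)\<bar>)" by (simp add: Dsum_def)
end

lemma perms_lor: "p \<in> perms m \<Longrightarrow> lor p m"
  unfolding perms_def lor_def by simp

lemma finite_perms: "finite (perms m)"
  unfolding perms_def by (rule finite_permutations) simp

lemma card_perms: "card (perms m) = fact m"
  unfolding perms_def by (rule card_permutations) simp_all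

definition fib :: "nat \<Rightarrow> nat \<Rightarrow> nat \<Rightarrow> (nat \<Rightarrow> nat) set" where
  "fib m i j = {p \<in> perms m. p i = j}"

lemma fib_same:
  assumes j: "j \<in> {1..m}" and j': "j' \<in> {1..m}" and i: "i \<in> {1..m}"
  shows "card (fib m i j) = card (fib m i j')"
proof (rule bij_betw_same_card)
  let ?f = "\<lambda>p. Transposition.transpose j j' \<circ> p"
  show "bij_betw ?f (fib m i j) (fib m i j')"
  proof (rule bij_betw_byWitness[where f'="?f"])
    show "\<forall>a\<in>fib m i j. ?f (?f a) = a" by (simp add: fun_eq_iff)
    show "\<forall>a\<in>fib m i j'. ?f (?f a) = a" by (simp add: fun_eq_iff)
    show "?f ` fib m i j \<subseteq> fib m i j'"
    proof
      fix q assume "q \<in> ?f ` fib m i j"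
      then obtain p where p: "p \<in> fib m i j" "q = ?f p" by blast
      have pp: "p permutes {1..m}" "p i = j" using p(1) unfolding fib_def perms_def by auto
      have "q permutes {1..m}" using permutes_compose[OF pp(1) permutes_swap_id[OF j j']] p(2) by simp
      moreover have "q i = j'" using p(2) pp(2) by simp
      ultimately show "q \<in> fib m i j'" unfolding fib_def perms_def by simp
    qed
    show "?f ` fib m i j' \<subseteq> fib m i j"
    proof
      fix q assume "q \<in> ?f ` fib m i j'"
      then obtain p where p: "p \<in> fib m i j'" "q = ?f p" by blast
      have pp: "p permutes {1..m}" "p i = j'" using p(1) unfolding fib_def perms_def by auto
      have "q permutes {1..m}" using permutes_compose[OF pp(1) permutes_swap_id[OF j j']] p(2) by simp
      moreover have "q i = j" using p(2) pp(2) by simp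
      ultimately show "q \<in> fib m i j" unfolding fib_def perms_def by simp
    qed
  qed
qed

lemma perms_UN: assumes i: "i \<in> {1..m}" shows "perms m = (\<Union>j\<in>{1..m}. fib m i j)"
  unfolding fib_def perms_def using i permutes_in_image by fastforce

lemma fib_card:
  assumes i: "i \<in> {1..m}" and j: "j \<in> {1..m}"
  shows "card (fib m i j) = fact (m - 1)"
proof -
  have fin: "\<forall>j'\<in>{1..m}. finite (fib m i j')" unfolding fib_def using finite_perms by simp
  have dis: "\<forall>a\<in>{1..m}. \<forall>b\<in>{1..m}. a \<noteq> b \<longrightarrow> fib m i a \<inter> fib m i b = {}"
    unfolding fib_def by blast
  have "fact m = card (perms m)" by (simp add: card_perms)
  also have "\<dots> = (\<Sum>j'\<in>{1..m}. card (fib m i j'))"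
    unfolding perms_UN[OF i] by (rule card_UN_disjoint[OF finite_atLeastAtMost fin dis])
  also have "\<dots> = (\<Sum>j'\<in>{1..m}. card (fib m i j))"
  proof (rule sum.cong[OF refl])
    fix j' assume "j' \<in> {1..m}"
    then show "card (fib m i j') = card (fib m i j)" by (rule fib_same[OF _ j i])
  qed
  also have "\<dots> = m * card (fib m i j)" by simp
  finally have e: "fact m = m * card (fib m i j)" .
  have m1: "0 < m" using i by simp
  have "fact m = m * fact (m - 1)" using fact_reduce[of m, where 'a=nat] m1 by simp
  then show ?thesis using e m1 by simp
qed

lemma sum_perm_fun:
  fixes f :: "nat \<Rightarrow> real"
  assumes i: "i \<in> {1..m}"
  shows "(\<Sum>p\<in>perms m. f (p i)) = fact (m - 1) * (\<Sum>j\<in>{1..m}. f j)"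
proof -
  have fin: "finite {p \<in> perms m. p i = j'}" for j' using finite_perms by simp
  have "(\<Sum>p\<in>perms m. f (p i)) = (\<Sum>j\<in>{1..m}. \<Sum>p\<in>fib m i j. f (p i))"
    unfolding perms_UN[OF i] by (rule sum.UNION_disjoint) (auto simp: fin fib_def)
  also have "\<dots> = (\<Sum>j\<in>{1..m}. real (card (fib m i j)) * f j)"
    by (rule sum.cong) (auto simp: fib_def)
  also have "\<dots> = (\<Sum>j\<in>{1..m}. fact (m - 1) * f j)"
    by (rule sum.cong) (use fib_card[OF i] in auto)
  finally show ?thesis by (simp add: sum_distrib_left)
qed

lemma sum_real_nat: "(\<Sum>j\<in>{1..m}. real j) = real m * (real m + 1) / 2"
proof (induct m)
  case 0 then show ?case by simp
next
  case (Suc m)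
  have "{1..Suc m} = insert (Suc m) {1..m}" by auto
  then show ?case using Suc by (simp add: field_simps)
qed

lemma G_sum: "(\<Sum>j\<in>{1..m}. \<bar>real (Suc m) - real j\<bar>) = real m * (real m + 1) / 2"
proof -
  have "(\<Sum>j\<in>{1..m}. \<bar>real (Suc m) - real j\<bar>) = (\<Sum>j\<in>{1..m}. real (Suc m) - real j)"
    by (rule sum.cong) auto
  also have "\<dots> = real m * real (Suc m) - (\<Sum>j\<in>{1..m}. real j)" by (simp add: sum_subtractf)
  finally show ?thesis using sum_real_nat[of m] by (simp add: field_simps)
qed

lemma T_sum: "(\<Sum>i\<in>{1..m}. \<Sum>j\<in>{1..m}. \<bar>real i - real j\<bar>) = real m * (real m * real m - 1) / 3"
proof (induct m)
  case 0 then show ?case by simp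
next
  case (Suc m)
  let ?A = "{1..m}" and ?a = "Suc m"
  have ins: "{1..Suc m} = insert ?a ?A" by auto
  have na: "?a \<notin> ?A" by simp
  have G2: "(\<Sum>j\<in>?A. \<bar>real j - real ?a\<bar>) = real m * (real m + 1) / 2"
    using G_sum[of m] by (simp add: abs_minus_commute)
  have "(\<Sum>i\<in>{1..Suc m}. \<Sum>j\<in>{1..Suc m}. \<bar>real i - real j\<bar>) =
      (\<Sum>j\<in>?A. \<bar>real ?a - real j\<bar>) + (\<Sum>i\<in>?A. \<bar>real i - real ?a\<bar> + (\<Sum>j\<in>?A. \<bar>real i - real j\<bar>))"
    unfolding ins using na by (simp add: sum.insert)
  also have "\<dots> = (\<Sum>j\<in>?A. \<bar>real ?a - real j\<bar>) + (\<Sum>i\<in>?A. \<bar>real i - real ?a\<bar>) + (\<Sum>i\<in>?A. \<Sum>j\<in>?A. \<bar>real i - real j\<bar>)"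
    by (simp add: sum.distrib)
  also have "\<dots> = real m * (real m + 1) + real m * (real m * real m - 1) / 3"
    using G_sum[of m] G2 Suc by simp
  finally show ?case by (simp add: field_simps)
qed

lemma sum_Dsum:
  assumes m1: "1 \<le> m"
  shows "(\<Sum>p\<in>perms m. lor.Dsum p m) = fact (m - 1) * (real m * (real m * real m - 1) / 3)"
proof -
  have "(\<Sum>p\<in>perms m. lor.Dsum p m) = (\<Sum>p\<in>perms m. \<Sum>i\<in>{1..m}. \<bar>real i - real (p i)\<bar>)"
    by (rule sum.cong[OF refl]) (rule lor.Dsum_eq[OF perms_lor])
  also have "\<dots> = (\<Sum>i\<in>{1..m}. \<Sum>p\<in>perms m. \<bar>real i - real (p i)\<bar>)" by (rule sum.swap)
  also have "\<dots> = (\<Sum>i\<in>{1..m}. fact (m - 1) * (\<Sum>j\<in>{1..m}. \<bar>real i - real j\<bar>))"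
    by (rule sum.cong[OF refl]) (rule sum_perm_fun[where f="\<lambda>j. \<bar>real _ - real j\<bar>"])
  also have "\<dots> = fact (m - 1) * (\<Sum>i\<in>{1..m}. \<Sum>j\<in>{1..m}. \<bar>real i - real j\<bar>)"
    by (simp add: sum_distrib_left)
  finally show ?thesis using T_sum by simp
qed

lemma fact_real_reduce: "1 \<le> m \<Longrightarrow> (fact m :: real) = real m * fact (m - 1)"
  using fact_reduce[of m, where 'a=real] by simp

lemma exp_bounds:
  fixes cp ct :: real
  assumes cp: "0 \<le> cp" and ct: "0 \<le> ct" and m1: "1 \<le> m"
  shows "ct * ((real m * real m - 1) / 3) \<le> exp_opt_cost cp ct m"
    "exp_opt_cost cp ct m \<le> exp_sweep_cost cp ct m"
    "exp_sweep_cost cp ct m \<le> 2 * real m * cp + ct * ((real m * real m - 1) / 3 + 2 * real m)"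
proof -
  let ?N = "real (card (perms m))"
  have N: "?N = fact m" by (simp add: card_perms)
  have Npos: "0 < ?N" unfolding N by simp
  have fm: "(fact m :: real) = real m * fact (m - 1)" by (rule fact_real_reduce[OF m1])
  have mpos: "0 < real m" using m1 by simp
  have SD: "(\<Sum>p\<in>perms m. lor.Dsum p m) = fact (m - 1) * (real m * (real m * real m - 1) / 3)"
    by (rule sum_Dsum[OF m1])
  have SDN: "(\<Sum>p\<in>perms m. lor.Dsum p m) / ?N = (real m * real m - 1) / 3"
    unfolding SD N fm using mpos by (simp add: field_simps)
  have "(\<Sum>p\<in>perms m. ct * lor.Dsum p m) \<le> (\<Sum>p\<in>perms m. opt_cost cp ct m p)"
    by (rule sum_mono) (rule lor.opt_ge_D[OF perms_lor cp ct])
  then have "(\<Sum>p\<in>perms m. ct * lor.Dsum p m) / ?N \<le> exp_opt_cost cp ct m"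
    unfolding exp_opt_cost_def using Npos by (simp add: divide_right_mono)
  moreover have "(\<Sum>p\<in>perms m. ct * lor.Dsum p m) / ?N = ct * ((\<Sum>p\<in>perms m. lor.Dsum p m) / ?N)"
    by (simp add: sum_distrib_left[symmetric])
  moreover note SDN
  ultimately show "ct * ((real m * real m - 1) / 3) \<le> exp_opt_cost cp ct m" by metis
  have "(\<Sum>p\<in>perms m. opt_cost cp ct m p) \<le> (\<Sum>p\<in>perms m. cost cp ct (sweep_plan p m))"
    by (rule sum_mono) (rule lor.opt_le_sweep[OF perms_lor cp ct])
  then show "exp_opt_cost cp ct m \<le> exp_sweep_cost cp ct m"
    unfolding exp_opt_cost_def exp_sweep_cost_def using Npos by (simp add: divide_right_mono)
  have "(\<Sum>p\<in>perms m. cost cp ct (sweep_plan p m)) \<le>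
        (\<Sum>p\<in>perms m. (2 * real m * cp + ct * 2 * real m) + ct * lor.Dsum p m)"
    by (rule sum_mono) (use lor.sweep_cost_le[OF perms_lor cp ct] in \<open>simp add: algebra_simps\<close>)
  also have "\<dots> = ?N * (2 * real m * cp + ct * 2 * real m) + ct * (\<Sum>p\<in>perms m. lor.Dsum p m)"
    by (simp add: sum.distrib sum_distrib_left)
  finally have "exp_sweep_cost cp ct m \<le> (?N * (2 * real m * cp + ct * 2 * real m) + ct * (\<Sum>p\<in>perms m. lor.Dsum p m)) / ?N"
    unfolding exp_sweep_cost_def using Npos by (simp add: divide_right_mono)
  also have "\<dots> = (2 * real m * cp + ct * 2 * real m) + ct * ((\<Sum>p\<in>perms m. lor.Dsum p m) / ?N)"
    using Npos by (simp add: field_simps)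
  also have "\<dots> = 2 * real m * cp + ct * ((real m * real m - 1) / 3 + 2 * real m)"
    unfolding SDN by (simp add: algebra_simps)
  finally show "exp_sweep_cost cp ct m \<le> 2 * real m * cp + ct * ((real m * real m - 1) / 3 + 2 * real m)" .
qed

lemma ratio_bounds:
  fixes cp ct :: real
  assumes cp: "0 < cp" and ct: "0 < ct" and m2: "2 \<le> m"
  shows "1 \<le> exp_sweep_cost cp ct m / exp_opt_cost cp ct m"
    "exp_sweep_cost cp ct m / exp_opt_cost cp ct m \<le> 1 + (12 * (cp + ct) / ct) / real m"
proof -
  have m1: "1 \<le> m" using m2 by simp
  note B = exp_bounds[OF less_imp_le[OF cp] less_imp_le[OF ct] m1]
  define e where "e = (real m * real m - 1) / 3"
  have m2r: "2 \<le> real m" using m2 by simp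
  have mm: "4 \<le> real m * real m" using mult_mono[OF m2r m2r] by simp
  have epos: "0 < e" unfolding e_def using mm by simp
  have A: "ct * e \<le> exp_opt_cost cp ct m" using B(1) unfolding e_def .
  have Apos: "0 < exp_opt_cost cp ct m" using A epos ct by (meson less_le_trans mult_pos_pos)
  have S: "exp_sweep_cost cp ct m \<le> 2 * real m * cp + ct * (e + 2 * real m)" using B(3) unfolding e_def .
  show "1 \<le> exp_sweep_cost cp ct m / exp_opt_cost cp ct m" using B(2) Apos by simp
  have Spos: "0 \<le> exp_sweep_cost cp ct m" using B(2) Apos by simp
  have "exp_sweep_cost cp ct m / exp_opt_cost cp ct m \<le> exp_sweep_cost cp ct m / (ct * e)"
    by (rule divide_left_mono[OF A Spos]) (use Apos epos ct in simp)
  also have "\<dots> \<le> (2 * real m * cp + ct * (e + 2 * real m)) / (ct * e)"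
    by (rule divide_right_mono[OF S]) (use epos ct in simp)
  also have "\<dots> = 1 + ((cp + ct) / ct) * (2 * real m / e)"
    using epos ct by (simp add: field_simps)
  also have "\<dots> \<le> 1 + ((cp + ct) / ct) * (12 / real m)"
  proof -
    have "2 * real m / e \<le> 12 / real m"
      unfolding e_def using mm m2r by (simp add: field_simps)
    moreover have "0 \<le> (cp + ct) / ct" using cp ct by simp
    ultimately show ?thesis using mult_left_mono by (metis add_le_cancel_left)
  qed
  also have "\<dots> = 1 + (12 * (cp + ct) / ct) / real m" by simp
  finally show "exp_sweep_cost cp ct m / exp_opt_cost cp ct m \<le> 1 + (12 * (cp + ct) / ct) / real m" .
qed

theorem corollary1:
  fixes cp ct :: real
  assumes "cp > 0" and "ct > 0"
  shows "((\<lambda>m. exp_sweep_cost cp ct m / exp_opt_cost cp ct m) \<longlonglongrightarrow> 1) \<and>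
         (\<forall>m \<pi>. \<pi> permutes {1..m} \<longrightarrow>
           valid_plan m \<pi> (opt_plan \<pi> m) \<and>
           (\<forall>ps. valid_plan m \<pi> ps \<longrightarrow> cost cp ct (opt_plan \<pi> m) \<le> cost cp ct ps))"
proof (intro conjI allI impI)
  show "(\<lambda>m. exp_sweep_cost cp ct m / exp_opt_cost cp ct m) \<longlonglongrightarrow> 1"
  proof (rule tendsto_sandwich[where f="\<lambda>_. 1" and h="\<lambda>m. 1 + (12 * (cp + ct) / ct) / real m"])
    show "\<forall>\<^sub>F m in sequentially. 1 \<le> exp_sweep_cost cp ct m / exp_opt_cost cp ct m"
      unfolding eventually_sequentially using ratio_bounds(1)[OF assms] by blast
    show "\<forall>\<^sub>F m in sequentially. exp_sweep_cost cp ct m / exp_opt_cost cp ct m \<le> 1 + (12 * (cp + ct) / ct) / real m"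
      unfolding eventually_sequentially using ratio_bounds(2)[OF assms] by blast
    show "(\<lambda>_. 1::real) \<longlonglongrightarrow> 1" by simp
    have "(\<lambda>m. 1 + (12 * (cp + ct) / ct) / real m) \<longlonglongrightarrow> 1 + 0"
      by (intro tendsto_add tendsto_const lim_const_over_n)
    then show "(\<lambda>m. 1 + (12 * (cp + ct) / ct) / real m) \<longlonglongrightarrow> 1" by simp
  qed
next
  fix m :: nat and \<pi> :: "nat \<Rightarrow> nat" assume p: "\<pi> permutes {1..m}"
  then have l: "lor \<pi> m" unfolding lor_def .
  show "valid_plan m \<pi> (opt_plan \<pi> m)" by (rule lor.opt_valid[OF l])
  fix ps assume "valid_plan m \<pi> ps"
  then show "cost cp ct (opt_plan \<pi> m) \<le> cost cp ct ps"
    using lor.opt_optimal[OF l] assms by simp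
qed

end
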